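(* Assume (A1)–(A3) and $m_1<0$. Then the quantity $V_1=\sum_{i\ge0}\pi_1(i)\mathbb E_{(i,0)}(Y_1(1))$ is well defined (the series converges absolutely), and for every $(k,\ell)\in\mathbb N\times\mathbb Z$, $\mathbb P_{(k,\ell)}$-almost surely, $\lim_{n\to\infty} Y_1(n)/n=V_1$.
   Context: Let $\mathbb N=\{0,1,2,\dots\}$ and fix an integer $k_0\ge1$. Let $\mu$, $\mu'_j$ ($0\le j<k_0$), $\mu''_i$ ($0\le i<k_0$), $\mu_{ij}$ ($0\le i,j<k_0$) be probability measures on $\mathbb Z^2$. The random walk $Z=(X(n),Y(n))$ on $\mathbb N^2$ has transition probabilities $p((i,j)\to(i',j'))$ equal to $\mu(i'-i,j'-j)$ if $i,j\ge k_0$; $\mu'_j(i'-i,j'-j)$ if $i\ge k_0$, $0\le j<k_0$; $\mu''_i(i'-i,j'-j)$ if $0\le i<k_0$, $j\ge k_0$; $\mu_{ij}(i'-i,j'-j)$ if $0\le i,j<k_0$. Assumptions: (A1) $\mu(a,b)=0$ if $a<-k_0$ or $b<-k_0$; $\mu'_j(a,b)=0$ if $a<-k_0$ or $b<-j$; $\mu''_i(a,b)=0$ if $b<-k_0$ or $a<-i$; $\mu_{ij}(a,b)=0$ if $a<-i$ or $b<-j$. (A2) There are $\delta,\gamma,C>0$ with $\sup_{(i,j)\in\mathbb N^2}\mathbb E_{(i,j)}[\exp(\delta(X(1)-i)+\gamma(Y(1)-j))]\le C$. (A3) $Z_0$, $Z_1$, $Z_2$ and $Z$ are irreducible on their state spaces.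 $Z_0$: random walk on $\mathbb Z^2$ with increment law $\mu$; $m_1=\sum a\mu(a,b)$. $Z_1=(X_1,Y_1)$: Markov chain on $\mathbb N\times\mathbb Z$ with $p_1((i,j)\to(i',j'))=\mu(i'-i,j'-j)$ if $i\ge k_0$ and $\mu''_i(i'-i,j'-j)$ if $0\le i<k_0$; $\mathbb P_{(k,\ell)}$ denotes its law started at $(k,\ell)$. $Z_2$: Markov chain on $\mathbb Z\times\mathbb N$ with transitions $\mu$ for $j\ge k_0$ and $\mu'_j$ for $0\le j<k_0$. The first coordinate $X_1$ is a Markov chain on $\mathbb N$; when $m_1<0$ it is positive recurrent, with invariant distribution $\pi_1$. *)

theory Defs
  imports "HOL-Probability.Probability"
begin

definition incZ :: "nat \<Rightarrow> (int\<times>int) pmf \<Rightarrow> (nat \<Rightarrow> (int\<times>int) pmf) \<Rightarrow> (nat \<Rightarrow> (int\<times>int) pmf)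
    \<Rightarrow> (nat \<Rightarrow> nat \<Rightarrow> (int\<times>int) pmf) \<Rightarrow> nat \<times> nat \<Rightarrow> (int\<times>int) pmf" where
  "incZ k0 \<mu> \<mu>' \<mu>'' \<mu>ij s =
     (if k0 \<le> fst s \<and> k0 \<le> snd s then \<mu>
      else if k0 \<le> fst s then \<mu>' (snd s)
      else if k0 \<le> snd s then \<mu>'' (fst s)
      else \<mu>ij (fst s) (snd s))"

definition trZ :: "nat \<Rightarrow> (int\<times>int) pmf \<Rightarrow> (nat \<Rightarrow> (int\<times>int) pmf) \<Rightarrow> (nat \<Rightarrow> (int\<times>int) pmf)
    \<Rightarrow> (nat \<Rightarrow> nat \<Rightarrow> (int\<times>int) pmf) \<Rightarrow> nat \<times> nat \<Rightarrow> (nat\<times>nat) pmf" where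
  "trZ k0 \<mu> \<mu>' \<mu>'' \<mu>ij s =
     map_pmf (\<lambda>d. (nat (int (fst s) + fst d), nat (int (snd s) + snd d))) (incZ k0 \<mu> \<mu>' \<mu>'' \<mu>ij s)"

definition trZ0 :: "(int\<times>int) pmf \<Rightarrow> int \<times> int \<Rightarrow> (int\<times>int) pmf" where
  "trZ0 \<mu> s = map_pmf (\<lambda>d. (fst s + fst d, snd s + snd d)) \<mu>"

definition trZ1 :: "nat \<Rightarrow> (int\<times>int) pmf \<Rightarrow> (nat \<Rightarrow> (int\<times>int) pmf) \<Rightarrow> nat \<times> int \<Rightarrow> (nat\<times>int) pmf" where
  "trZ1 k0 \<mu> \<mu>'' s =
     map_pmf (\<lambda>d. (nat (int (fst s) + fst d), snd s + snd d)) (if k0 \<le> fst s then \<mu> else \<mu>'' (fst s))"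

definition trZ2 :: "nat \<Rightarrow> (int\<times>int) pmf \<Rightarrow> (nat \<Rightarrow> (int\<times>int) pmf) \<Rightarrow> int \<times> nat \<Rightarrow> (int\<times>nat) pmf" where
  "trZ2 k0 \<mu> \<mu>' s =
     map_pmf (\<lambda>d. (fst s + fst d, nat (int (snd s) + snd d))) (if k0 \<le> snd s then \<mu> else \<mu>' (snd s))"

(* transition law of the first coordinate X1 of Z1 (does not depend on the second coordinate) *)
definition trX1 :: "nat \<Rightarrow> (int\<times>int) pmf \<Rightarrow> (nat \<Rightarrow> (int\<times>int) pmf) \<Rightarrow> nat \<Rightarrow> nat pmf" where
  "trX1 k0 \<mu> \<mu>'' i = map_pmf fst (trZ1 k0 \<mu> \<mu>'' (i, 0))"

definition irreducible_kernel :: "('s \<Rightarrow> 's pmf) \<Rightarrow> bool" where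
  "irreducible_kernel P \<longleftrightarrow> (\<forall>x y. (x, y) \<in> {(u, v). pmf (P u) v > 0}\<^sup>*)"

definition invariant_distr :: "('s \<Rightarrow> 's pmf) \<Rightarrow> 's pmf \<Rightarrow> bool" where
  "invariant_distr P \<pi>0 \<longleftrightarrow> bind_pmf \<pi>0 P = \<pi>0"

definition markov_chain_from :: "'w measure \<Rightarrow> ('s \<Rightarrow> 's pmf) \<Rightarrow> 's \<Rightarrow> (nat \<Rightarrow> 'w \<Rightarrow> 's) \<Rightarrow> bool" where
  "markov_chain_from M P x0 Z \<longleftrightarrow>
     prob_space M \<and>
     (\<forall>n. Z n \<in> M \<rightarrow>\<^sub>M count_space UNIV) \<and>
     (AE \<omega> in M. Z 0 \<omega> = x0) \<and>
     (\<forall>n (h :: nat \<Rightarrow> 's).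
        measure M {\<omega> \<in> space M. \<forall>m\<le>Suc n. Z m \<omega> = h m}
        = measure M {\<omega> \<in> space M. \<forall>m\<le>n. Z m \<omega> = h m} * pmf (P (h n)) (h (Suc n)))"

end

theory Submission
  imports Defs
begin

primrec path_law :: "('s \<Rightarrow> 's pmf) \<Rightarrow> 's \<Rightarrow> nat \<Rightarrow> 's list pmf" where
  "path_law P x0 0 = return_pmf [x0]"
| "path_law P x0 (Suc n) = bind_pmf (path_law P x0 n) (\<lambda>w. map_pmf (\<lambda>s. w @ [s]) (P (last w)))"

lemma path_law_len: "w \<in> set_pmf (path_law P x0 n) \<Longrightarrow> length w = Suc n"
  by (induction n arbitrary: w) auto

lemma pmf_path_law_Suc:
  fixes P :: "'s \<Rightarrow> 's pmf"
  shows "pmf (path_law P x0 (Suc n)) w =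
     (if w = [] then 0 else pmf (path_law P x0 n) (butlast w) * pmf (P (last (butlast w))) (last w))"
proof -
  have "ennreal (pmf (path_law P x0 (Suc n)) w) =
     (\<integral>\<^sup>+v. pmf (map_pmf (\<lambda>s. v @ [s]) (P (last v))) w \<partial>measure_pmf (path_law P x0 n))"
    by (simp add: ennreal_pmf_bind)
  also have "\<dots> = (\<integral>\<^sup>+v. (if w = [] then 0 else ennreal (pmf (P (last (butlast w))) (last w))) * indicator {butlast w} v
            \<partial>measure_pmf (path_law P x0 n))"
  proof (rule nn_integral_cong)
    fix v :: "'s list"
    have inj: "inj (\<lambda>s. v @ [s])" by (auto simp: inj_def)
    show "ennreal (pmf (map_pmf (\<lambda>s. v @ [s]) (P (last v))) w) =
          (if w = [] then 0 else ennreal (pmf (P (last (butlast w))) (last w))) * indicator {butlast w} v"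
    proof (cases "w \<noteq> [] \<and> v = butlast w")
      case True
      then have w: "w = v @ [last w]" by (metis append_butlast_last_id)
      show ?thesis using True pmf_map_inj'[OF inj, of "P (last v)" "last w"] w by (metis indicator_simps(1) mult.right_neutral singletonI)
    next
      case False
      have "w \<notin> (\<lambda>s. v @ [s]) ` set_pmf (P (last v))"
        using False by auto
      then have "pmf (map_pmf (\<lambda>s. v @ [s]) (P (last v))) w = 0"
        by (simp add: pmf_map_outside)
      then show ?thesis using False by auto
    qed
  qed
  also have "\<dots> = (if w = [] then 0 else ennreal (pmf (P (last (butlast w))) (last w))) * pmf (path_law P x0 n) (butlast w)"
    by (simp add: nn_integral_cmult_indicator emeasure_pmf_single)
  finally show ?thesis
    by (auto simp: ennreal_mult'[symmetric] mult.commute)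
qed

definition path_of :: "(nat \<Rightarrow> 'w \<Rightarrow> 's) \<Rightarrow> nat \<Rightarrow> 'w \<Rightarrow> 's list" where
  "path_of Z n \<omega> = map (\<lambda>m. Z m \<omega>) [0..<Suc n]"

lemma path_of_Suc: "path_of Z (Suc n) \<omega> = path_of Z n \<omega> @ [Z (Suc n) \<omega>]"
  by (simp add: path_of_def)

lemma path_of_eq_iff: "path_of Z n \<omega> = v \<longleftrightarrow> length v = Suc n \<and> (\<forall>m\<le>n. Z m \<omega> = v ! m)"
  unfolding path_of_def list_eq_iff_nth_eq
  by (auto simp: less_Suc_eq_le simp del: upt_Suc)

lemma path_of_nth: "m \<le> n \<Longrightarrow> path_of Z n \<omega> ! m = Z m \<omega>"
  unfolding path_of_def by (simp add: less_Suc_eq_le del: upt_Suc)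

lemma path_of_length[simp]: "length (path_of Z n \<omega>) = Suc n"
  unfolding path_of_def by simp

lemma path_of_last: "last (path_of Z n \<omega>) = Z n \<omega>"
  unfolding path_of_def by (simp del: upt_Suc add: last_map)

lemma measurable_path_of:
  fixes Z :: "nat \<Rightarrow> 'w \<Rightarrow> 's::countable"
  assumes "\<And>n. Z n \<in> M \<rightarrow>\<^sub>M count_space UNIV"
  shows "path_of Z n \<in> M \<rightarrow>\<^sub>M count_space UNIV"
proof (induction n)
  case 0
  have "path_of Z 0 = (\<lambda>s. [s]) \<circ> Z 0" by (auto simp: path_of_def)
  then show ?case using assms by (simp add: measurable_comp)
next
  case (Suc n)
  have "path_of Z (Suc n) = (\<lambda>\<omega>. (\<lambda>v \<omega>. v @ [Z (Suc n) \<omega>]) (path_of Z n \<omega>) \<omega>)"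
    by (auto simp: path_of_Suc)
  moreover have "(\<lambda>\<omega>. v @ [Z (Suc n) \<omega>]) \<in> M \<rightarrow>\<^sub>M count_space UNIV" for v :: "'s list"
  proof -
    have "(\<lambda>\<omega>. v @ [Z (Suc n) \<omega>]) = (\<lambda>s. v @ [s]) \<circ> Z (Suc n)" by auto
    then show ?thesis using assms by (simp add: measurable_comp)
  qed
  then have "(\<lambda>\<omega>. (\<lambda>v \<omega>. v @ [Z (Suc n) \<omega>]) (path_of Z n \<omega>) \<omega>) \<in> M \<rightarrow>\<^sub>M count_space UNIV"
    by (rule measurable_compose_countable'[where I=UNIV]) (use Suc in auto)
  ultimately show ?case by simp
qed

lemma chain_path_measure:
  fixes Z :: "nat \<Rightarrow> 'w \<Rightarrow> 's::countable"
  assumes mc: "markov_chain_from M P x0 Z"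
  shows "measure M {\<omega> \<in> space M. path_of Z n \<omega> = w} = pmf (path_law P x0 n) w"
proof -
  have ps: "prob_space M" and meas: "\<And>n. Z n \<in> M \<rightarrow>\<^sub>M count_space UNIV"
    and ae: "AE \<omega> in M. Z 0 \<omega> = x0"
    and fdd: "\<And>n h. measure M {\<omega> \<in> space M. \<forall>m\<le>Suc n. Z m \<omega> = h m}
        = measure M {\<omega> \<in> space M. \<forall>m\<le>n. Z m \<omega> = h m} * pmf (P (h n)) (h (Suc n))"
    using mc unfolding markov_chain_from_def by auto
  interpret prob_space M by fact
  have sets: "{\<omega> \<in> space M. Q (Z m \<omega>)} \<in> sets M" for Q m
    using meas[of m] by measurable
  show ?thesis
  proof (induction n arbitrary: w)
    case 0
    show ?case
    proof (cases "\<exists>x. w = [x]")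
      case True
      then obtain x where w: "w = [x]" by auto
      have eq: "{\<omega> \<in> space M. path_of Z 0 \<omega> = w} = {\<omega> \<in> space M. Z 0 \<omega> = x}"
        by (auto simp: path_of_def w)
      show ?thesis
      proof (cases "x = x0")
        case True
        have "prob {\<omega> \<in> space M. Z 0 \<omega> = x} = 1"
          using prob_Collect_eq_1[OF sets[of "\<lambda>s. s = x" 0]] ae True by simp
        then show ?thesis using eq w True by simp
      next
        case False
        have "AE \<omega> in M. \<not> Z 0 \<omega> = x" using ae False by auto
        then have "prob {\<omega> \<in> space M. Z 0 \<omega> = x} = 0"
          using prob_Collect_eq_0[OF sets[of "\<lambda>s. s = x" 0]] by simp
        then show ?thesis using eq w False by (simp add: pmf_return)
      qed
    next
      case False
      then have "{\<omega> \<in> space M. path_of Z 0 \<omega> = w} = {}"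
        by (auto simp: path_of_def)
      moreover have "pmf (path_law P x0 0) w = 0" using False by (auto simp: pmf_return split: split_indicator)
      ultimately show ?thesis by (metis measure_empty)
    qed
  next
    case (Suc n)
    show ?case
    proof (cases "length w = Suc (Suc n)")
      case False
      then have "{\<omega> \<in> space M. path_of Z (Suc n) \<omega> = w} = {}"
        by auto
      moreover have "pmf (path_law P x0 (Suc n)) w = 0"
        using False path_law_len by (metis set_pmf_iff)
      ultimately show ?thesis by (metis measure_empty)
    next
      case True
      have e1: "{\<omega> \<in> space M. path_of Z (Suc n) \<omega> = w} = {\<omega> \<in> space M. \<forall>m\<le>Suc n. Z m \<omega> = w ! m}"
        using True by (auto simp: path_of_eq_iff)
      have e2: "{\<omega> \<in> space M. \<forall>m\<le>n. Z m \<omega> = w ! m} = {\<omega> \<in> space M. path_of Z n \<omega> = butlast w}"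
        using True by (auto simp: path_of_eq_iff nth_butlast)
      have wn: "w \<noteq> []" using True by auto
      have l1: "last (butlast w) = w ! n" using True
        by (subst last_conv_nth) (auto simp: nth_butlast dest: arg_cong[where f=length])
      have l2: "last w = w ! Suc n" using True by (subst last_conv_nth) (auto dest: arg_cong[where f=length])
      show ?thesis
        unfolding e1 fdd e2 Suc.IH pmf_path_law_Suc using wn l1 l2 by simp
    qed
  qed
qed

lemma chain_distr_path:
  fixes Z :: "nat \<Rightarrow> 'w \<Rightarrow> 's::countable"
  assumes mc: "markov_chain_from M P x0 Z"
  shows "distr M (count_space UNIV) (path_of Z n) = measure_pmf (path_law P x0 n)"
proof -
  have ps: "prob_space M" and meas: "\<And>n. Z n \<in> M \<rightarrow>\<^sub>M count_space UNIV"
    using mc unfolding markov_chain_from_def by auto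
  interpret prob_space M by fact
  have mp: "path_of Z n \<in> M \<rightarrow>\<^sub>M count_space UNIV" by (rule measurable_path_of[OF meas])
  show ?thesis
  proof (rule measure_eqI_countable[where A=UNIV])
    fix a :: "'s list"
    have "emeasure (distr M (count_space UNIV) (path_of Z n)) {a} = emeasure M (path_of Z n -` {a} \<inter> space M)"
      using mp by (simp add: emeasure_distr)
    also have "path_of Z n -` {a} \<inter> space M = {\<omega> \<in> space M. path_of Z n \<omega> = a}" by auto
    also have "emeasure M \<dots> = measure M \<dots>" by (simp add: emeasure_eq_measure)
    also have "\<dots> = pmf (path_law P x0 n) a" by (simp add: chain_path_measure[OF mc])
    finally show "emeasure (distr M (count_space UNIV) (path_of Z n)) {a} = emeasure (measure_pmf (path_law P x0 n)) {a}"
      by (simp add: emeasure_pmf_single)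
  qed auto
qed

lemma pow_le_1_plus4:
  fixes t :: real
  assumes "k \<le> 4"
  shows "\<bar>t\<bar>^k \<le> 1 + t^4"
proof (cases "\<bar>t\<bar> \<le> 1")
  case True then have "\<bar>t\<bar>^k \<le> 1" by (simp add: power_le_one)
  moreover have "0 \<le> t^4" by simp
  ultimately show ?thesis by linarith
next
  case False
  have "\<bar>t\<bar>^k \<le> \<bar>t\<bar>^4" by (rule power_increasing) (use assms False in auto)
  also have "\<bar>t\<bar>^4 = \<bar>t^4\<bar>" by (simp add: power_abs)
  also have "\<dots> = t^4" by simp
  finally show ?thesis by simp
qed

lemma inner_moments:
  fixes p :: "'s pmf" and f :: "'s \<Rightarrow> real"
  assumes int4: "integrable p (\<lambda>s. f s ^ 4)" and mean0: "(\<integral>s. f s \<partial>p) = 0"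
    and bound: "(\<integral>s. f s ^ 4 \<partial>p) \<le> K"
  shows "integrable p (\<lambda>s. (a + f s)^2)" "(\<integral>s. (a + f s)^2 \<partial>p) \<le> a^2 + (1+K)"
    "integrable p (\<lambda>s. (a + f s)^4)" "(\<integral>s. (a + f s)^4 \<partial>p) \<le> a^4 + 8*(1+K)*a^2 + 3*(1+K)"
proof -
  have i1: "integrable p (\<lambda>s. 1 + f s ^ 4)" using int4 by simp
  have ik: "integrable p (\<lambda>s. f s ^ k)" if "k \<le> 4" for k
    by (rule Bochner_Integration.integrable_bound[OF i1]) (use pow_le_1_plus4[OF that] in \<open>auto simp: power_abs\<close>)
  have i0: "integrable p f" using ik[of 1] by simp
  have i2: "integrable p (\<lambda>s. f s ^ 2)" using ik[of 2] by simp
  have i3: "integrable p (\<lambda>s. f s ^ 3)" using ik[of 3] by simp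
  have e1: "(\<integral>s. 1 + f s ^ 4 \<partial>p) = 1 + (\<integral>s. f s ^ 4 \<partial>p)"
    using int4 by (simp add: Bochner_Integration.integral_add)
  have "0 \<le> (\<integral>s. f s ^ 4 \<partial>p)" by (rule Bochner_Integration.integral_nonneg) simp
  then have K0: "0 \<le> K" using bound by linarith
  have m2: "(\<integral>s. f s ^ 2 \<partial>p) \<le> 1 + K"
  proof -
    have "(\<integral>s. f s ^ 2 \<partial>p) \<le> (\<integral>s. 1 + f s ^ 4 \<partial>p)"
      by (rule integral_mono[OF i2 i1]) (use pow_le_1_plus4[of 2] in \<open>auto simp: power_abs\<close>)
    then show ?thesis using e1 bound by linarith
  qed
  have m3: "\<bar>\<integral>s. f s ^ 3 \<partial>p\<bar> \<le> 1 + K"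
  proof -
    have "\<bar>\<integral>s. f s ^ 3 \<partial>p\<bar> \<le> (\<integral>s. \<bar>f s ^ 3\<bar> \<partial>p)" by (rule integral_abs_bound)
    also have "\<dots> \<le> (\<integral>s. 1 + f s ^ 4 \<partial>p)"
      by (rule integral_mono[OF integrable_abs[OF i3] i1]) (use pow_le_1_plus4[of 3] in \<open>auto simp: power_abs\<close>)
    finally show ?thesis using e1 bound by linarith
  qed
  have eq2: "(\<lambda>s. (a + f s)^2) = (\<lambda>s. a^2 + (2*a) * f s + f s ^ 2)"
    by (auto simp: power2_eq_square algebra_simps)
  show "integrable p (\<lambda>s. (a + f s)^2)" unfolding eq2 using i0 i2 by simp
  have "(\<integral>s. (a + f s)^2 \<partial>p) = a^2 + (2*a) * (\<integral>s. f s \<partial>p) + (\<integral>s. f s ^ 2 \<partial>p)"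
    unfolding eq2 using i0 i2 by (simp add: Bochner_Integration.integral_add)
  then show "(\<integral>s. (a + f s)^2 \<partial>p) \<le> a^2 + (1+K)" using mean0 m2 by simp
  have eq4: "(\<lambda>s. (a + f s)^4) = (\<lambda>s. a^4 + (4*a^3) * f s + (6*a^2) * f s ^ 2 + (4*a) * f s ^ 3 + f s ^ 4)"
    by (auto simp: power2_eq_square power3_eq_cube power4_eq_xxxx algebra_simps)
  show "integrable p (\<lambda>s. (a + f s)^4)" unfolding eq4 using i0 i2 i3 int4 by simp
  have "(\<integral>s. (a + f s)^4 \<partial>p) = a^4 + (4*a^3) * (\<integral>s. f s \<partial>p) + (6*a^2) * (\<integral>s. f s ^ 2 \<partial>p)
      + (4*a) * (\<integral>s. f s ^ 3 \<partial>p) + (\<integral>s. f s ^ 4 \<partial>p)"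
    unfolding eq4 using i0 i2 i3 int4 by (simp add: Bochner_Integration.integral_add)
  also have "\<dots> \<le> a^4 + 6*a^2*(1+K) + 4*\<bar>a\<bar>*(1+K) + K"
  proof -
    have "(6*a^2) * (\<integral>s. f s ^ 2 \<partial>p) \<le> 6*a^2*(1+K)"
      using m2 by (intro mult_left_mono) auto
    moreover have "(4*a) * (\<integral>s. f s ^ 3 \<partial>p) \<le> 4*\<bar>a\<bar>*(1+K)"
    proof -
      have "(4*a) * (\<integral>s. f s ^ 3 \<partial>p) \<le> \<bar>(4*a) * (\<integral>s. f s ^ 3 \<partial>p)\<bar>" by simp
      also have "\<dots> = 4*\<bar>a\<bar> * \<bar>\<integral>s. f s ^ 3 \<partial>p\<bar>" by (simp add: abs_mult)
      also have "\<dots> \<le> 4*\<bar>a\<bar>*(1+K)" using m3 by (intro mult_left_mono) auto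
      finally show ?thesis .
    qed
    ultimately show ?thesis using mean0 bound by simp
  qed
  also have "\<dots> \<le> a^4 + 8*(1+K)*a^2 + 3*(1+K)"
  proof -
    have "0 \<le> (\<bar>a\<bar> - 1)^2" by simp
    then have "2*\<bar>a\<bar> \<le> 1 + a^2" by (simp add: power2_eq_square algebra_simps)
    then have "4*\<bar>a\<bar>*(1+K) \<le> (2 + 2*a^2)*(1+K)" using K0 by (intro mult_right_mono) auto
    then show ?thesis using K0 by (simp add: algebra_simps)
  qed
  finally show "(\<integral>s. (a + f s)^4 \<partial>p) \<le> a^4 + 8*(1+K)*a^2 + 3*(1+K)" .
qed

definition psum :: "('s \<Rightarrow> 's \<Rightarrow> real) \<Rightarrow> 's list \<Rightarrow> real" where
  "psum F w = (\<Sum>m < length w - 1. F (w!m) (w!Suc m))"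

lemma psum_snoc:
  assumes "w \<noteq> []"
  shows "psum F (w @ [s]) = psum F w + F (last w) s"
proof -
  obtain k where k: "length w = Suc k" using assms by (cases w) auto
  have "psum F (w @ [s]) = (\<Sum>m < Suc k. F ((w@[s])!m) ((w@[s])!Suc m))"
    unfolding psum_def using k by simp
  also have "\<dots> = (\<Sum>m < k. F ((w@[s])!m) ((w@[s])!Suc m)) + F ((w@[s])!k) ((w@[s])!Suc k)"
    by simp
  also have "(\<Sum>m < k. F ((w@[s])!m) ((w@[s])!Suc m)) = (\<Sum>m < k. F (w!m) (w!Suc m))"
    by (rule sum.cong) (use k in \<open>auto simp: nth_append\<close>)
  also have "(w@[s])!k = last w" using k assms by (simp add: nth_append last_conv_nth)
  also have "(w@[s])!Suc k = s" using k by (simp add: nth_append)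
  finally show ?thesis unfolding psum_def using k by simp
qed

lemma path_law_nonempty: "w \<in> set_pmf (path_law P x0 n) \<Longrightarrow> w \<noteq> []"
  using path_law_len[of w P x0 n] by auto

lemma psum_moments:
  fixes P :: "'s \<Rightarrow> 's pmf" and F :: "'s \<Rightarrow> 's \<Rightarrow> real"
  assumes int4: "\<And>x. integrable (P x) (\<lambda>s. F x s ^ 4)"
    and mean0: "\<And>x. (\<integral>s. F x s \<partial>P x) = 0"
    and bound: "\<And>x. (\<integral>s. F x s ^ 4 \<partial>P x) \<le> K"
  shows "(\<integral>\<^sup>+w. ennreal ((psum F w)^2) \<partial>path_law P xi n) \<le> ennreal (real n * (1+K))"
    "(\<integral>\<^sup>+w. ennreal ((psum F w)^4) \<partial>path_law P xi n) \<le> ennreal (11 * (1+K)^2 * (real n)^2)"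
proof -
  have K0: "0 \<le> K"
  proof -
    have "0 \<le> (\<integral>s. F xi s ^ 4 \<partial>P xi)" by (rule Bochner_Integration.integral_nonneg) simp
    then show ?thesis using bound[of xi] by linarith
  qed
  have step2: "(\<integral>\<^sup>+w. ennreal ((psum F w)^2) \<partial>path_law P xi (Suc n)) \<le>
      (\<integral>\<^sup>+w. ennreal ((psum F w)^2) \<partial>path_law P xi n) + ennreal (1+K)" for n
  proof -
    have "(\<integral>\<^sup>+w. ennreal ((psum F w)^2) \<partial>path_law P xi (Suc n)) =
       (\<integral>\<^sup>+w. (\<integral>\<^sup>+s. ennreal ((psum F (w @ [s]))^2) \<partial>P (last w)) \<partial>path_law P xi n)"
      by simp
    also have "\<dots> \<le> (\<integral>\<^sup>+w. ennreal ((psum F w)^2 + (1+K)) \<partial>path_law P xi n)"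
    proof (rule nn_integral_mono_AE)
      show "AE w in measure_pmf (path_law P xi n). (\<integral>\<^sup>+s. ennreal ((psum F (w @ [s]))^2) \<partial>P (last w))
            \<le> ennreal ((psum F w)^2 + (1+K))"
      proof (rule AE_pmfI)
        fix w assume w: "w \<in> set_pmf (path_law P xi n)"
        then have wn: "w \<noteq> []" by (rule path_law_nonempty)
        note im = inner_moments[OF int4 mean0 bound, of "last w" "psum F w"]
        have "(\<integral>\<^sup>+s. ennreal ((psum F (w @ [s]))^2) \<partial>P (last w)) =
              (\<integral>\<^sup>+s. ennreal ((psum F w + F (last w) s)^2) \<partial>P (last w))"
          using psum_snoc[OF wn] by simp
        also have "\<dots> = ennreal (\<integral>s. (psum F w + F (last w) s)^2 \<partial>P (last w))"
          by (rule nn_integral_eq_integral) (use im in auto)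
        also have "\<dots> \<le> ennreal ((psum F w)^2 + (1+K))"
          using im by (intro ennreal_leI) auto
        finally show "(\<integral>\<^sup>+s. ennreal ((psum F (w @ [s]))^2) \<partial>P (last w)) \<le> ennreal ((psum F w)^2 + (1+K))" .
      qed
    qed
    also have "\<dots> = (\<integral>\<^sup>+w. ennreal ((psum F w)^2) \<partial>path_law P xi n) + ennreal (1+K)"
    proof -
      have "(\<integral>\<^sup>+w. ennreal ((psum F w)^2 + (1+K)) \<partial>path_law P xi n) = (\<integral>\<^sup>+w. ennreal ((psum F w)^2) + ennreal (1+K) \<partial>path_law P xi n)"
        by (intro nn_integral_cong) (simp add: ennreal_plus K0)
      also have "\<dots> = (\<integral>\<^sup>+w. ennreal ((psum F w)^2) \<partial>path_law P xi n) + (\<integral>\<^sup>+w. ennreal (1+K) \<partial>path_law P xi n)"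
        by (rule nn_integral_add) auto
      finally show ?thesis by (simp add: measure_pmf.emeasure_space_1)
    qed
    finally show ?thesis .
  qed
  show e2: "(\<integral>\<^sup>+w. ennreal ((psum F w)^2) \<partial>path_law P xi n) \<le> ennreal (real n * (1+K))" for n
  proof (induction n)
    case 0
    show ?case by (simp add: psum_def)
  next
    case (Suc n)
    have "(\<integral>\<^sup>+w. ennreal ((psum F w)^2) \<partial>path_law P xi (Suc n)) \<le> ennreal (real n * (1+K)) + ennreal (1+K)"
      using step2[of n] Suc.IH by (meson add_right_mono order_trans)
    also have "\<dots> = ennreal (real (Suc n) * (1+K))"
      using K0 by (simp add: algebra_simps)
    finally show ?case .
  qed
  have step4: "(\<integral>\<^sup>+w. ennreal ((psum F w)^4) \<partial>path_law P xi (Suc n)) \<le>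
      (\<integral>\<^sup>+w. ennreal ((psum F w)^4) \<partial>path_law P xi n)
      + ennreal (8*(1+K)) * (\<integral>\<^sup>+w. ennreal ((psum F w)^2) \<partial>path_law P xi n) + ennreal (3*(1+K))" for n
  proof -
    have "(\<integral>\<^sup>+w. ennreal ((psum F w)^4) \<partial>path_law P xi (Suc n)) =
       (\<integral>\<^sup>+w. (\<integral>\<^sup>+s. ennreal ((psum F (w @ [s]))^4) \<partial>P (last w)) \<partial>path_law P xi n)"
      by simp
    also have "\<dots> \<le> (\<integral>\<^sup>+w. ennreal ((psum F w)^4) + ennreal (8*(1+K)) * ennreal ((psum F w)^2) + ennreal (3*(1+K)) \<partial>path_law P xi n)"
    proof (rule nn_integral_mono_AE)
      show "AE w in measure_pmf (path_law P xi n). (\<integral>\<^sup>+s. ennreal ((psum F (w @ [s]))^4) \<partial>P (last w))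
            \<le> ennreal ((psum F w)^4) + ennreal (8*(1+K)) * ennreal ((psum F w)^2) + ennreal (3*(1+K))"
      proof (rule AE_pmfI)
        fix w assume w: "w \<in> set_pmf (path_law P xi n)"
        then have wn: "w \<noteq> []" by (rule path_law_nonempty)
        note im = inner_moments[OF int4 mean0 bound, of "last w" "psum F w"]
        have "(\<integral>\<^sup>+s. ennreal ((psum F (w @ [s]))^4) \<partial>P (last w)) =
              (\<integral>\<^sup>+s. ennreal ((psum F w + F (last w) s)^4) \<partial>P (last w))"
          using psum_snoc[OF wn] by simp
        also have "\<dots> = ennreal (\<integral>s. (psum F w + F (last w) s)^4 \<partial>P (last w))"
          by (rule nn_integral_eq_integral) (use im in auto)
        also have "\<dots> \<le> ennreal ((psum F w)^4 + 8*(1+K)*(psum F w)^2 + 3*(1+K))"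
          using im by (intro ennreal_leI) auto
        also have "\<dots> = ennreal ((psum F w)^4) + ennreal (8*(1+K)) * ennreal ((psum F w)^2) + ennreal (3*(1+K))"
          using K0 by (simp add: ennreal_mult')
        finally show "(\<integral>\<^sup>+s. ennreal ((psum F (w @ [s]))^4) \<partial>P (last w)) \<le> ennreal ((psum F w)^4) + ennreal (8*(1+K)) * ennreal ((psum F w)^2) + ennreal (3*(1+K))" .
      qed
    qed
    also have "\<dots> = (\<integral>\<^sup>+w. ennreal ((psum F w)^4) \<partial>path_law P xi n)
      + ennreal (8*(1+K)) * (\<integral>\<^sup>+w. ennreal ((psum F w)^2) \<partial>path_law P xi n) + ennreal (3*(1+K))"
    proof -
      have "(\<integral>\<^sup>+w. ennreal ((psum F w)^4) + ennreal (8*(1+K)) * ennreal ((psum F w)^2) + ennreal (3*(1+K)) \<partial>path_law P xi n)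
        = (\<integral>\<^sup>+w. ennreal ((psum F w)^4) + ennreal (8*(1+K)) * ennreal ((psum F w)^2) \<partial>path_law P xi n) + (\<integral>\<^sup>+w. ennreal (3*(1+K)) \<partial>path_law P xi n)"
        by (rule nn_integral_add) auto
      also have "(\<integral>\<^sup>+w. ennreal ((psum F w)^4) + ennreal (8*(1+K)) * ennreal ((psum F w)^2) \<partial>path_law P xi n)
         = (\<integral>\<^sup>+w. ennreal ((psum F w)^4) \<partial>path_law P xi n) + (\<integral>\<^sup>+w. ennreal (8*(1+K)) * ennreal ((psum F w)^2) \<partial>path_law P xi n)"
        by (rule nn_integral_add) auto
      also have "(\<integral>\<^sup>+w. ennreal (8*(1+K)) * ennreal ((psum F w)^2) \<partial>path_law P xi n) = ennreal (8*(1+K)) * (\<integral>\<^sup>+w. ennreal ((psum F w)^2) \<partial>path_law P xi n)"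
        by (rule nn_integral_cmult) auto
      finally show ?thesis by (simp add: measure_pmf.emeasure_space_1)
    qed
    finally show ?thesis .
  qed
  show "(\<integral>\<^sup>+w. ennreal ((psum F w)^4) \<partial>path_law P xi n) \<le> ennreal (11 * (1+K)^2 * (real n)^2)"
  proof (induction n)
    case 0
    show ?case by (simp add: psum_def)
  next
    case (Suc n)
    have "(\<integral>\<^sup>+w. ennreal ((psum F w)^4) \<partial>path_law P xi (Suc n)) \<le>
       ennreal (11 * (1+K)^2 * (real n)^2) + ennreal (8*(1+K)) * ennreal (real n * (1+K)) + ennreal (3*(1+K))"
    proof -
      have "ennreal (8*(1+K)) * (\<integral>\<^sup>+w. ennreal ((psum F w)^2) \<partial>path_law P xi n) \<le> ennreal (8*(1+K)) * ennreal (real n * (1+K))"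
        using e2[of n] by (rule mult_left_mono) simp
      then show ?thesis using step4[of n] Suc.IH
        by (meson add_mono order_refl order_trans)
    qed
    also have "\<dots> = ennreal (11 * (1+K)^2 * (real n)^2 + 8*(1+K)*(real n * (1+K)) + 3*(1+K))"
      using K0 by (simp add: ennreal_mult')
    also have "\<dots> \<le> ennreal (11 * (1+K)^2 * (real (Suc n))^2)"
    proof (rule ennreal_leI)
      have "1*(1+K) \<le> (1+K)*(1+K)" by (rule mult_right_mono) (use K0 in auto)
      then have a: "3*(1+K) \<le> 11*(1+K)^2" using K0 unfolding power2_eq_square by (smt (verit))
      have b1: "8*(1+K)*(real n * (1+K)) = 8*((1+K)^2*real n)" by (simp add: power2_eq_square algebra_simps)
      have b2: "0 \<le> (1+K)^2*real n" by simp
      have b: "8*(1+K)*(real n * (1+K)) \<le> 22*(1+K)^2 * real n" using b1 b2 by (simp add: algebra_simps)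
      show "11 * (1+K)^2 * (real n)^2 + 8*(1+K)*(real n * (1+K)) + 3*(1+K) \<le> 11 * (1+K)^2 * (real (Suc n))^2"
        using a b by (simp add: power2_eq_square algebra_simps)
    qed
    finally show ?case .
  qed
qed

lemma psum_path_of: "psum F (path_of Z n \<omega>) = (\<Sum>m<n. F (Z m \<omega>) (Z (Suc m) \<omega>))"
  unfolding psum_def by (intro sum.cong) (auto simp: path_of_nth)

lemma chain_mart_slln:
  fixes Z :: "nat \<Rightarrow> 'w \<Rightarrow> 's::countable" and F :: "'s \<Rightarrow> 's \<Rightarrow> real"
  assumes mc: "markov_chain_from M P x0 Z"
    and int4: "\<And>x. integrable (P x) (\<lambda>s. F x s ^ 4)"
    and mean0: "\<And>x. (\<integral>s. F x s \<partial>P x) = 0"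
    and bound: "\<And>x. (\<integral>s. F x s ^ 4 \<partial>P x) \<le> K"
  shows "AE \<omega> in M. (\<lambda>n. (\<Sum>m<n. F (Z m \<omega>) (Z (Suc m) \<omega>)) / real n) \<longlonglongrightarrow> 0"
proof -
  have ps: "prob_space M" and meas: "\<And>n. Z n \<in> M \<rightarrow>\<^sub>M count_space UNIV"
    using mc unfolding markov_chain_from_def by auto
  interpret prob_space M by fact
  have mp: "\<And>n. path_of Z n \<in> M \<rightarrow>\<^sub>M count_space UNIV" by (rule measurable_path_of[OF meas])
  define B where "B = 11 * (1+K)^2"
  have B0: "0 \<le> B" unfolding B_def by simp
  have eps: "AE \<omega> in M. eventually (\<lambda>n. \<bar>psum F (path_of Z n \<omega>)\<bar> < e * real n) sequentially"
    if e: "e > 0" for e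
  proof -
    define A where "A n = {\<omega> \<in> space M. e * real n \<le> \<bar>psum F (path_of Z n \<omega>)\<bar>}" for n
    have Am: "A n \<in> sets M" for n
    proof -
      have "A n = path_of Z n -` {w. e * real n \<le> \<bar>psum F w\<bar>} \<inter> space M" unfolding A_def by auto
      then show ?thesis using measurable_sets[OF mp[of n], of "{w. e * real n \<le> \<bar>psum F w\<bar>}"] by simp
    qed
    have Aeq: "emeasure M (A n) = emeasure (measure_pmf (path_law P x0 n)) {w. e * real n \<le> \<bar>psum F w\<bar>}" for n
    proof -
      have "A n = path_of Z n -` {w. e * real n \<le> \<bar>psum F w\<bar>} \<inter> space M" unfolding A_def by auto
      then have "emeasure M (A n) = emeasure (distr M (count_space UNIV) (path_of Z n)) {w. e * real n \<le> \<bar>psum F w\<bar>}"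
        using mp[of n] by (simp add: emeasure_distr)
      then show ?thesis by (simp add: chain_distr_path[OF mc])
    qed
    have Abound: "measure M (A n) \<le> B / e^4 * inverse (real n ^ 2)" if n: "n \<ge> 1" for n
    proof -
      define c where "c = (e * real n)^4"
      have c0: "c > 0" unfolding c_def using e n by simp
      have "ennreal c * emeasure (measure_pmf (path_law P x0 n)) {w. e * real n \<le> \<bar>psum F w\<bar>}
          = (\<integral>\<^sup>+w. ennreal c * indicator {w. e * real n \<le> \<bar>psum F w\<bar>} w \<partial>path_law P x0 n)"
        by (simp add: nn_integral_cmult_indicator)
      also have "\<dots> \<le> (\<integral>\<^sup>+w. ennreal ((psum F w)^4) \<partial>path_law P x0 n)"
      proof (rule nn_integral_mono)
        fix w
        show "ennreal c * indicator {w. e * real n \<le> \<bar>psum F w\<bar>} w \<le> ennreal ((psum F w)^4)"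
        proof (cases "e * real n \<le> \<bar>psum F w\<bar>")
          case True
          have "c \<le> \<bar>psum F w\<bar>^4" unfolding c_def
            by (rule power_mono[OF True]) (use e in simp)
          then show ?thesis using True by (simp add: power_abs ennreal_leI)
        qed simp
      qed
      also have "\<dots> \<le> ennreal (B * (real n)^2)"
        using psum_moments(2)[OF int4 mean0 bound, where xi=x0 and n=n] unfolding B_def by simp
      finally have "ennreal c * emeasure M (A n) \<le> ennreal (B * (real n)^2)" by (simp add: Aeq)
      then have "ennreal (c * measure M (A n)) \<le> ennreal (B * (real n)^2)"
        using c0 by (simp add: emeasure_eq_measure ennreal_mult)
      then have "c * measure M (A n) \<le> B * (real n)^2"
        using B0 by (simp add: ennreal_le_iff)
      then have "measure M (A n) \<le> B * (real n)^2 / c"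
        using c0 by (simp add: field_simps)
      also have "B * (real n)^2 / c = B / e^4 * inverse (real n ^ 2)"
        unfolding c_def using n e by (simp add: field_simps power_mult_distrib power2_eq_square power4_eq_xxxx)
      finally show ?thesis .
    qed
    have summ: "summable (\<lambda>n. measure M (A n))"
    proof (rule summable_comparison_test'[where N=1])
      show "summable (\<lambda>n. B / e^4 * inverse (real n ^ 2))"
        by (intro summable_mult inverse_power_summable) simp
      show "norm (measure M (A n)) \<le> B / e^4 * inverse (real n ^ 2)" if "n \<ge> 1" for n
        using Abound[OF that] by simp
    qed
    have "AE \<omega> in M. eventually (\<lambda>n. \<omega> \<in> space M - A n) sequentially"
      by (rule borel_cantelli_AE1) (use Am summ in \<open>auto simp: emeasure_eq_measure\<close>)
    then show ?thesis
    proof (rule AE_mp[OF _ AE_I2[OF impI]])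
      fix \<omega> assume \<omega>: "\<omega> \<in> space M" and ev: "eventually (\<lambda>n. \<omega> \<in> space M - A n) sequentially"
      show "eventually (\<lambda>n. \<bar>psum F (path_of Z n \<omega>)\<bar> < e * real n) sequentially"
        using ev by eventually_elim (auto simp: A_def \<omega>)
    qed
  qed
  have "AE \<omega> in M. \<forall>k::nat. eventually (\<lambda>n. \<bar>psum F (path_of Z n \<omega>)\<bar> < (1 / Suc k) * real n) sequentially"
    by (rule AE_all_countable[THEN iffD2]) (intro allI eps, simp)
  then show ?thesis
  proof (rule AE_mp[OF _ AE_I2[OF impI]])
    fix \<omega> assume all: "\<forall>k::nat. eventually (\<lambda>n. \<bar>psum F (path_of Z n \<omega>)\<bar> < (1 / Suc k) * real n) sequentially"
    show "(\<lambda>n. (\<Sum>m<n. F (Z m \<omega>) (Z (Suc m) \<omega>)) / real n) \<longlonglongrightarrow> 0"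
    proof (rule LIMSEQ_I)
      fix r :: real assume r: "r > 0"
      obtain k :: nat where k: "1 / Suc k < r"
        using r by (metis nat_approx_posE)
      have ev: "eventually (\<lambda>n. \<bar>psum F (path_of Z n \<omega>)\<bar> < (1 / Suc k) * real n \<and> n \<ge> 1) sequentially"
        using all[rule_format, of k] eventually_ge_at_top[of 1] by (auto intro: eventually_conj)
      then obtain N where N: "\<And>n. n \<ge> N \<Longrightarrow> \<bar>psum F (path_of Z n \<omega>)\<bar> < (1 / Suc k) * real n \<and> n \<ge> 1"
        by (auto simp: eventually_sequentially)
      show "\<exists>N. \<forall>n\<ge>N. norm ((\<Sum>m<n. F (Z m \<omega>) (Z (Suc m) \<omega>)) / real n - 0) < r"
      proof (intro exI allI impI)
        fix n assume "n \<ge> N"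
        then have a: "\<bar>psum F (path_of Z n \<omega>)\<bar> < (1 / Suc k) * real n" and n1: "n \<ge> 1" using N by auto
        have "\<bar>psum F (path_of Z n \<omega>)\<bar> / real n < 1 / Suc k"
          using a n1 by (simp add: divide_less_eq)
        then show "norm ((\<Sum>m<n. F (Z m \<omega>) (Z (Suc m) \<omega>)) / real n - 0) < r"
          using k by (simp add: psum_path_of)
      qed
    qed
  qed
qed

lemma pow4_sum_le: "0 \<le> p \<Longrightarrow> 0 \<le> q \<Longrightarrow> (p + q)^4 \<le> 8 * (p^4 + q^4)" for p q :: real
proof -
  assume p: "0 \<le> p" and q: "0 \<le> q"
  have "0 \<le> (p - q)^2" by simp
  then have s: "(p+q)^2 \<le> 2*(p^2+q^2)" by (simp add: power2_eq_square algebra_simps)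
  have "(p+q)^4 = ((p+q)^2)^2" by simp
  also have "\<dots> \<le> (2*(p^2+q^2))^2" using s by (intro power_mono) auto
  also have "\<dots> = 4*((p^2+q^2)^2)" by (simp add: power2_eq_square algebra_simps)
  also have "(p^2+q^2)^2 \<le> 2*(p^4+q^4)"
  proof -
    have "0 \<le> (p^2 - q^2)^2" by simp
    then show ?thesis by (simp add: power2_eq_square power4_eq_xxxx algebra_simps)
  qed
  finally show ?thesis by simp
qed

lemma pow4_le_exp: "0 \<le> u \<Longrightarrow> 0 < \<eta> \<Longrightarrow> u^4 \<le> (4/\<eta>)^4 * exp (\<eta> * u)" for u \<eta> :: real
proof -
  assume u: "0 \<le> u" and e: "0 < \<eta>"
  have z: "\<eta> * u / 4 \<le> exp (\<eta> * u / 4)" using exp_ge_add_one_self[of "\<eta> * u / 4"] by linarith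
  have "u^4 = (4/\<eta>)^4 * (\<eta> * u / 4)^4" using e by (simp add: field_simps)
  also have "(\<eta> * u / 4)^4 \<le> (exp (\<eta> * u / 4))^4" using z u e by (intro power_mono) auto
  also have "(exp (\<eta> * u / 4))^4 = exp (\<eta> * u)" by (simp add: exp_of_nat_mult[symmetric])
  finally show ?thesis using e by (simp add: mult_left_mono)
qed

locale rw1 =
  fixes k0 :: nat and mu :: "(int\<times>int) pmf" and mu2 :: "nat \<Rightarrow> (int\<times>int) pmf"
    and \<delta> \<gamma> C :: real and pi :: "nat pmf"
  assumes k0: "k0 \<ge> 1"
    and A1_mu: "\<And>a b. (a < - int k0 \<or> b < - int k0) \<Longrightarrow> pmf mu (a, b) = 0"
    and A1_mu2: "\<And>i a b. i < k0 \<Longrightarrow> (b < - int k0 \<or> a < - int i) \<Longrightarrow> pmf (mu2 i) (a, b) = 0"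
    and dpos: "\<delta> > 0" and gpos: "\<gamma> > 0"
    and A2: "\<And>x. (\<integral>\<^sup>+ d. ennreal (exp (\<delta> * real_of_int (fst d) + \<gamma> * real_of_int (snd d)))
               \<partial>measure_pmf (if k0 \<le> x then mu else mu2 x)) \<le> ennreal C"
    and irr: "irreducible_kernel (trZ1 k0 mu mu2)"
    and m1_neg: "measure_pmf.expectation mu (\<lambda>d. real_of_int (fst d)) < 0"
    and pi_inv: "invariant_distr (trX1 k0 mu mu2) pi"
begin

definition nu :: "nat \<Rightarrow> (int\<times>int) pmf" where "nu x = (if k0 \<le> x then mu else mu2 x)"

abbreviation P1 where "P1 \<equiv> trZ1 k0 mu mu2"
abbreviation Q where "Q \<equiv> trX1 k0 mu mu2"

lemma nu_supp:
  assumes "d \<in> set_pmf (nu x)"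
  shows "- int x \<le> fst d" "- int k0 \<le> fst d" "- int k0 \<le> snd d"
proof -
  obtain a b where d: "d = (a, b)" by force
  have pos: "pmf (nu x) (a, b) \<noteq> 0" using assms d by (simp add: set_pmf_iff)
  have "- int x \<le> a \<and> - int k0 \<le> a \<and> - int k0 \<le> b"
  proof (cases "k0 \<le> x")
    case True
    then have "\<not> (a < - int k0 \<or> b < - int k0)" using pos A1_mu[of a b] by (auto simp: nu_def)
    then show ?thesis using True by auto
  next
    case False
    then have "\<not> (b < - int k0 \<or> a < - int x)" using pos A1_mu2[of x b a] by (auto simp: nu_def)
    then show ?thesis using False by auto
  qed
  then show "- int x \<le> fst d" "- int k0 \<le> fst d" "- int k0 \<le> snd d" using d by auto
qed

definition Lc :: real where
  "Lc = (4 / min \<delta> \<gamma>)^4 * exp ((4 * min \<delta> \<gamma> + \<delta> + \<gamma>) * real k0)"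

definition B0 :: real where "B0 = Lc * C"

lemma Lc_pos: "0 < Lc" unfolding Lc_def using dpos gpos by simp

lemma C_pos: "0 < C"
proof (rule ccontr)
  assume "\<not> 0 < C"
  then have "ennreal C = 0" by (simp add: ennreal_eq_0_iff)
  then have "(\<integral>\<^sup>+ d. ennreal (exp (\<delta> * real_of_int (fst d) + \<gamma> * real_of_int (snd d))) \<partial>measure_pmf (nu 0)) \<le> 0"
    using A2[of 0] unfolding nu_def by simp
  moreover have "(\<integral>\<^sup>+ d. ennreal 0 \<partial>measure_pmf (nu 0)) < (\<integral>\<^sup>+ d. ennreal (exp (\<delta> * real_of_int (fst d) + \<gamma> * real_of_int (snd d))) \<partial>measure_pmf (nu 0))"
    by (rule nn_integral_less) (auto simp: measure_pmf.emeasure_space_1)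
  ultimately show False by simp
qed

lemma mom4_pointwise:
  assumes "d \<in> set_pmf (nu x)"
  shows "(\<bar>real_of_int (fst d)\<bar> + \<bar>real_of_int (snd d)\<bar>)^4 \<le>
      Lc * exp (\<delta> * real_of_int (fst d) + \<gamma> * real_of_int (snd d))"
proof -
  define a where "a = real_of_int (fst d)"
  define b where "b = real_of_int (snd d)"
  define \<eta> where "\<eta> = min \<delta> \<gamma>"
  have e: "0 < \<eta>" "\<eta> \<le> \<delta>" "\<eta> \<le> \<gamma>" unfolding \<eta>_def using dpos gpos by auto
  have a0: "- real k0 \<le> a" unfolding a_def using nu_supp(2)[OF assms] by linarith
  have b0: "- real k0 \<le> b" unfolding b_def using nu_supp(3)[OF assms] by linarith
  define u where "u = a + b + 4 * real k0"
  have abu: "\<bar>a\<bar> + \<bar>b\<bar> \<le> u" unfolding u_def using a0 b0 by linarith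
  have u0: "0 \<le> u" unfolding u_def using a0 b0 by linarith
  have "(\<bar>a\<bar> + \<bar>b\<bar>)^4 \<le> u^4" using abu by (intro power_mono) auto
  also have "\<dots> \<le> (4/\<eta>)^4 * exp (\<eta> * u)" by (rule pow4_le_exp[OF u0 e(1)])
  also have "exp (\<eta> * u) \<le> exp (\<delta> * a + \<gamma> * b + (4 * \<eta> + \<delta> + \<gamma>) * real k0)"
  proof -
    have "0 \<le> (\<delta> - \<eta>) * (a + real k0)" using e a0 by simp
    moreover have "0 \<le> (\<gamma> - \<eta>) * (b + real k0)" using e b0 by simp
    moreover have "0 \<le> \<eta> * real k0" using e by simp
    ultimately have "\<eta> * u \<le> \<delta> * a + \<gamma> * b + (4 * \<eta> + \<delta> + \<gamma>) * real k0"
      unfolding u_def by (simp add: algebra_simps)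
    then show ?thesis by simp
  qed
  also have "exp (\<delta> * a + \<gamma> * b + (4 * \<eta> + \<delta> + \<gamma>) * real k0) = exp ((4 * \<eta> + \<delta> + \<gamma>) * real k0) * exp (\<delta> * a + \<gamma> * b)"
    by (simp add: exp_add[symmetric] algebra_simps)
  finally show ?thesis unfolding Lc_def a_def b_def \<eta>_def using e by (simp add: mult.assoc mult_left_mono)
qed

lemma mom4:
  "integrable (nu x) (\<lambda>d. (\<bar>real_of_int (fst d)\<bar> + \<bar>real_of_int (snd d)\<bar>)^4)"
  "(\<integral>d. (\<bar>real_of_int (fst d)\<bar> + \<bar>real_of_int (snd d)\<bar>)^4 \<partial>nu x) \<le> B0"
proof -
  have "(\<integral>\<^sup>+d. ennreal ((\<bar>real_of_int (fst d)\<bar> + \<bar>real_of_int (snd d)\<bar>)^4) \<partial>nu x)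
     \<le> (\<integral>\<^sup>+d. ennreal Lc * ennreal (exp (\<delta> * real_of_int (fst d) + \<gamma> * real_of_int (snd d))) \<partial>nu x)"
  proof (rule nn_integral_mono_AE, rule AE_pmfI)
    fix d assume "d \<in> set_pmf (nu x)"
    then show "ennreal ((\<bar>real_of_int (fst d)\<bar> + \<bar>real_of_int (snd d)\<bar>)^4) \<le> ennreal Lc * ennreal (exp (\<delta> * real_of_int (fst d) + \<gamma> * real_of_int (snd d)))"
      using mom4_pointwise Lc_pos by (simp add: ennreal_mult[symmetric] ennreal_leI)
  qed
  also have "\<dots> = ennreal Lc * (\<integral>\<^sup>+d. ennreal (exp (\<delta> * real_of_int (fst d) + \<gamma> * real_of_int (snd d))) \<partial>nu x)"
    by (rule nn_integral_cmult) auto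
  also have "\<dots> \<le> ennreal Lc * ennreal C"
    using A2[of x] unfolding nu_def by (intro mult_left_mono) auto
  also have "\<dots> = ennreal B0" unfolding B0_def using Lc_pos C_pos by (simp add: ennreal_mult)
  finally have fin: "(\<integral>\<^sup>+d. ennreal ((\<bar>real_of_int (fst d)\<bar> + \<bar>real_of_int (snd d)\<bar>)^4) \<partial>nu x) \<le> ennreal B0" .
  show int: "integrable (nu x) (\<lambda>d. (\<bar>real_of_int (fst d)\<bar> + \<bar>real_of_int (snd d)\<bar>)^4)"
    by (rule integrableI_nonneg) (use fin in \<open>auto simp: top.extremum_strict intro: le_less_trans\<close>)
  have "ennreal (\<integral>d. (\<bar>real_of_int (fst d)\<bar> + \<bar>real_of_int (snd d)\<bar>)^4 \<partial>nu x) \<le> ennreal B0"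
    using fin by (subst nn_integral_eq_integral[OF int, symmetric]) auto
  then show "(\<integral>d. (\<bar>real_of_int (fst d)\<bar> + \<bar>real_of_int (snd d)\<bar>)^4 \<partial>nu x) \<le> B0"
    using Lc_pos C_pos unfolding B0_def by (simp add: ennreal_le_iff)
qed

lemma affine_bound:
  fixes G :: "int \<times> int \<Rightarrow> real"
  assumes G: "\<And>d. d \<in> set_pmf (nu x) \<Longrightarrow> \<bar>G d\<bar> \<le> \<alpha> + \<beta> * (\<bar>real_of_int (fst d)\<bar> + \<bar>real_of_int (snd d)\<bar>)"
    and a: "0 \<le> \<alpha>" and b: "0 \<le> \<beta>"
  shows "integrable (nu x) (\<lambda>d. G d ^ 4)" "(\<integral>d. G d ^ 4 \<partial>nu x) \<le> 8 * \<alpha>^4 + 8 * \<beta>^4 * B0"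
    "integrable (nu x) G"
proof -
  define T where "T d = \<bar>real_of_int (fst d)\<bar> + \<bar>real_of_int (snd d)\<bar>" for d :: "int \<times> int"
  have iT: "integrable (nu x) (\<lambda>d. T d ^ 4)" using mom4(1) unfolding T_def .
  have iD: "integrable (nu x) (\<lambda>d. 8 * \<alpha>^4 + 8 * \<beta>^4 * T d ^ 4)" using iT by simp
  have pw: "G d ^ 4 \<le> 8 * \<alpha>^4 + 8 * \<beta>^4 * T d ^ 4" if "d \<in> set_pmf (nu x)" for d
  proof -
    have "G d ^ 4 = \<bar>G d\<bar> ^ 4" by (simp add: power_even_abs_numeral)
    also have "\<dots> \<le> (\<alpha> + \<beta> * T d)^4" using G[OF that] unfolding T_def by (intro power_mono) auto
    also have "\<dots> \<le> 8 * (\<alpha>^4 + (\<beta> * T d)^4)" by (rule pow4_sum_le) (use a b in \<open>auto simp: T_def\<close>)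
    also have "\<dots> = 8 * \<alpha>^4 + 8 * \<beta>^4 * T d ^ 4" by (simp add: power_mult_distrib algebra_simps)
    finally show ?thesis .
  qed
  show i4: "integrable (nu x) (\<lambda>d. G d ^ 4)"
  proof (rule Bochner_Integration.integrable_bound[OF iD])
    show "AE d in nu x. norm (G d ^ 4) \<le> norm (8 * \<alpha>^4 + 8 * \<beta>^4 * T d ^ 4)"
      using pw by (intro AE_pmfI) (auto simp: power_even_abs_numeral)
  qed simp
  have "(\<integral>d. G d ^ 4 \<partial>nu x) \<le> (\<integral>d. 8 * \<alpha>^4 + 8 * \<beta>^4 * T d ^ 4 \<partial>nu x)"
    by (rule integral_mono_AE[OF i4 iD]) (use pw in \<open>auto intro: AE_pmfI\<close>)
  also have "\<dots> = 8 * \<alpha>^4 + 8 * \<beta>^4 * (\<integral>d. T d ^ 4 \<partial>nu x)"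
    using iT by simp
  also have "\<dots> \<le> 8 * \<alpha>^4 + 8 * \<beta>^4 * B0"
    using mom4(2)[of x] b unfolding T_def by (intro add_left_mono mult_left_mono) auto
  finally show "(\<integral>d. G d ^ 4 \<partial>nu x) \<le> 8 * \<alpha>^4 + 8 * \<beta>^4 * B0" .
  show "integrable (nu x) G"
  proof (rule Bochner_Integration.integrable_bound[where f="\<lambda>d. 1 + G d ^ 4"])
    show "integrable (nu x) (\<lambda>d. 1 + G d ^ 4)" using i4 by simp
    show "AE d in nu x. norm (G d) \<le> norm (1 + G d ^ 4)"
      using pow_le_1_plus4[of 1] by (intro AE_pmfI) (auto simp: power_even_abs_numeral)
  qed simp
qed

lemma P1_eq: "P1 s = map_pmf (\<lambda>d. (nat (int (fst s) + fst d), snd s + snd d)) (nu (fst s))"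
  by (simp add: trZ1_def nu_def)

lemma Q_eq: "Q x = map_pmf (\<lambda>d. nat (int x + fst d)) (nu x)"
  by (simp add: trX1_def trZ1_def nu_def map_pmf_comp)

lemma fst_P1: "map_pmf fst (P1 s) = Q (fst s)"
  by (simp add: P1_eq Q_eq map_pmf_comp)

lemma real_step: "d \<in> set_pmf (nu x) \<Longrightarrow> real (nat (int x + fst d)) = real x + real_of_int (fst d)"
  using nu_supp(1)[of d x] by simp

definition dr :: "nat \<Rightarrow> real" where "dr x = (\<integral>d. real_of_int (fst d) \<partial>nu x)"
definition gY :: "nat \<Rightarrow> real" where "gY x = (\<integral>d. real_of_int (snd d) \<partial>nu x)"
definition m1 :: real where "m1 = measure_pmf.expectation mu (\<lambda>d. real_of_int (fst d))"
definition m2 :: real where "m2 = measure_pmf.expectation mu (\<lambda>d. real_of_int (snd d))"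

lemma m1_neg': "m1 < 0" using m1_neg unfolding m1_def .

lemma dr_ge: "k0 \<le> x \<Longrightarrow> dr x = m1" by (simp add: dr_def m1_def nu_def)
lemma gY_ge: "k0 \<le> x \<Longrightarrow> gY x = m2" by (simp add: gY_def m2_def nu_def)

lemma int_fst: "integrable (nu x) (\<lambda>d. real_of_int (fst d))"
  by (rule affine_bound(3)[where \<alpha>=0 and \<beta>=1]) auto

lemma int_snd: "integrable (nu x) (\<lambda>d. real_of_int (snd d))"
  by (rule affine_bound(3)[where \<alpha>=0 and \<beta>=1]) auto

definition D0 :: real where "D0 = 1 + 8 * B0"

lemma abs_int_bound:
  assumes "\<And>d. d \<in> set_pmf (nu x) \<Longrightarrow> \<bar>G d\<bar> \<le> \<bar>real_of_int (fst d)\<bar> + \<bar>real_of_int (snd d)\<bar>"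
  shows "\<bar>\<integral>d. G d \<partial>nu x\<bar> \<le> D0"
proof -
  have i4: "integrable (nu x) (\<lambda>d. G d ^ 4)" and b4: "(\<integral>d. G d ^ 4 \<partial>nu x) \<le> 8 * 0^4 + 8 * 1^4 * B0"
    and i1: "integrable (nu x) G"
    using affine_bound[where \<alpha>=0 and \<beta>=1 and G=G] assms by auto
  have "\<bar>\<integral>d. G d \<partial>nu x\<bar> \<le> (\<integral>d. \<bar>G d\<bar> \<partial>nu x)" by (rule integral_abs_bound)
  also have "\<dots> \<le> (\<integral>d. 1 + G d ^ 4 \<partial>nu x)"
    by (rule integral_mono[OF integrable_abs[OF i1]]) (use i4 pow_le_1_plus4[of 1] in \<open>auto simp: power_even_abs_numeral\<close>)
  also have "\<dots> = 1 + (\<integral>d. G d ^ 4 \<partial>nu x)" using i4 by simp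
  finally show ?thesis using b4 unfolding D0_def by simp
qed

lemma dr_bound: "\<bar>dr x\<bar> \<le> D0" unfolding dr_def by (rule abs_int_bound) auto
lemma gY_bound: "\<bar>gY x\<bar> \<le> D0" unfolding gY_def by (rule abs_int_bound) auto

lemma B0_pos: "0 < B0" unfolding B0_def using Lc_pos C_pos by simp

lemma D0_pos: "0 < D0"
  using B0_pos unfolding D0_def by simp

end

lemma pmf_le_nn_integral: "ennreal (pmf p x) * f x \<le> (\<integral>\<^sup>+y. f y \<partial>measure_pmf p)"
proof -
  have "(\<integral>\<^sup>+y. f x * indicator {x} y \<partial>measure_pmf p) \<le> (\<integral>\<^sup>+y. f y \<partial>measure_pmf p)"
    by (intro nn_integral_mono) (auto split: split_indicator)
  then show ?thesis by (simp add: nn_integral_cmult_indicator emeasure_pmf_single mult.commute)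
qed

lemma pmf_map_ge: "pmf p x \<le> pmf (map_pmf f p) (f x)"
  unfolding pmf_map by (simp add: measure_pmf_single[symmetric] measure_pmf.finite_measure_mono)

context rw1
begin

lemma Q_irr: "(x, y) \<in> {(u, v). pmf (Q u) v > 0}\<^sup>*"
proof -
  have "(s, t) \<in> {(u, v). pmf (P1 u) v > 0}\<^sup>* \<Longrightarrow> (fst s, fst t) \<in> {(u, v). pmf (Q u) v > 0}\<^sup>*" for s t
  proof (induction rule: rtrancl_induct)
    case base then show ?case by simp
  next
    case (step u v)
    have "pmf (P1 u) v \<le> pmf (map_pmf fst (P1 u)) (fst v)" by (rule pmf_map_ge)
    then have "pmf (Q (fst u)) (fst v) > 0" using step(2) by (simp add: fst_P1)
    then show ?case using step(3) by (auto intro: rtrancl_into_rtrancl)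
  qed
  from this[of "(x,0)" "(y,0)"] irr show ?thesis unfolding irreducible_kernel_def by auto
qed

lemma pi_step: "pmf pi x * pmf (Q x) y \<le> pmf pi y"
proof -
  have "ennreal (pmf pi x) * ennreal (pmf (Q x) y) \<le> (\<integral>\<^sup>+z. ennreal (pmf (Q z) y) \<partial>measure_pmf pi)"
    by (rule pmf_le_nn_integral)
  also have "\<dots> = ennreal (pmf (bind_pmf pi Q) y)" by (simp add: ennreal_pmf_bind)
  also have "bind_pmf pi Q = pi" using pi_inv unfolding invariant_distr_def .
  finally show ?thesis by (simp add: ennreal_mult'[symmetric])
qed

lemma pi_pos: "pmf pi j > 0"
proof -
  obtain x0 where x0: "x0 \<in> set_pmf pi" using set_pmf_not_empty[of pi] by blast
  have "(x0, j) \<in> {(u, v). pmf (Q u) v > 0}\<^sup>*" by (rule Q_irr)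
  then show ?thesis
  proof (induction rule: rtrancl_induct)
    case base then show ?case using x0 by (simp add: set_pmf_iff)
  next
    case (step u v)
    then have "0 < pmf pi u * pmf (Q u) v" by simp
    then show ?case using pi_step[of u v] by linarith
  qed
qed

lemma real_step': "(a, b) \<in> set_pmf (nu x) \<Longrightarrow> real (nat (int x + a)) = real x + real_of_int a"
  using real_step[of "(a,b)" x] by simp

lemma Q_integrable_affine:
  assumes f: "\<And>y. \<bar>f y\<bar> \<le> \<alpha> + \<beta> * real y" and a: "0 \<le> \<alpha>" and b: "0 \<le> \<beta>"
  shows "integrable (Q x) f"
proof -
  have "integrable (nu x) (\<lambda>d. f (nat (int x + fst d)))"
  proof (rule affine_bound(3)[where \<alpha>="\<alpha> + \<beta> * real x" and \<beta>=\<beta>])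
    fix d assume d: "d \<in> set_pmf (nu x)"
    have "\<bar>f (nat (int x + fst d))\<bar> \<le> \<alpha> + \<beta> * (real x + real_of_int (fst d))"
      using f[of "nat (int x + fst d)"] real_step[OF d] by simp
    also have "\<dots> \<le> \<alpha> + \<beta> * real x + \<beta> * (\<bar>real_of_int (fst d)\<bar> + \<bar>real_of_int (snd d)\<bar>)"
    proof -
      have "real_of_int (fst d) \<le> \<bar>real_of_int (fst d)\<bar> + \<bar>real_of_int (snd d)\<bar>" by linarith
      then have "\<beta> * real_of_int (fst d) \<le> \<beta> * (\<bar>real_of_int (fst d)\<bar> + \<bar>real_of_int (snd d)\<bar>)"
        using b by (rule mult_left_mono)
      then show ?thesis by (simp add: algebra_simps)
    qed
    finally show "\<bar>f (nat (int x + fst d))\<bar> \<le> \<alpha> + \<beta> * real x + \<beta> * (\<bar>real_of_int (fst d)\<bar> + \<bar>real_of_int (snd d)\<bar>)" .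
  qed (use a b in auto)
  then show ?thesis by (simp add: Q_eq)
qed

lemma Q_lin: "integrable (Q x) real" "(\<integral>y. real y \<partial>Q x) = real x + dr x"
proof -
  show "integrable (Q x) real" by (rule Q_integrable_affine[where \<alpha>=0 and \<beta>=1]) auto
  have "(\<integral>y. real y \<partial>Q x) = (\<integral>d. real (nat (int x + fst d)) \<partial>nu x)" by (simp add: Q_eq)
  also have "\<dots> = (\<integral>d. real x + real_of_int (fst d) \<partial>nu x)"
    by (rule integral_cong_AE) (auto intro!: AE_pmfI simp: real_step')
  also have "\<dots> = real x + dr x" using int_fst by (simp add: dr_def)
  finally show "(\<integral>y. real y \<partial>Q x) = real x + dr x" .
qed

definition sig :: real where "sig = (\<integral>d. (real_of_int (fst d))^2 \<partial>mu)"

lemma Q_sq: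
  assumes x: "k0 \<le> x"
  shows "integrable (Q x) (\<lambda>y. (real y)^2)" "(\<integral>y. (real y)^2 \<partial>Q x) = (real x)^2 + 2 * real x * m1 + sig"
proof -
  have nx: "nu x = mu" using x by (simp add: nu_def)
  have i2: "integrable (nu x) (\<lambda>d. (real_of_int (fst d))^2)"
  proof -
    have i4: "integrable (nu x) (\<lambda>d. (real_of_int (fst d))^4)"
      by (rule affine_bound(1)[where \<alpha>=0 and \<beta>=1]) auto
    show ?thesis
      by (rule Bochner_Integration.integrable_bound[where f="\<lambda>d. 1 + (real_of_int (fst d))^4"])
         (use i4 pow_le_1_plus4[of 2] in \<open>auto intro!: AE_pmfI simp: power_even_abs_numeral\<close>)
  qed
  have exp: "(\<lambda>d. (real x + real_of_int (fst d))^2) = (\<lambda>d. (real x)^2 + (2 * real x) * real_of_int (fst d) + (real_of_int (fst d))^2)"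
    by (auto simp: power2_eq_square algebra_simps)
  have isq: "integrable (nu x) (\<lambda>d. (real x + real_of_int (fst d))^2)"
    unfolding exp using i2 int_fst by simp
  have ae: "AE d in nu x. (real (nat (int x + fst d)))^2 = (real x + real_of_int (fst d))^2"
    by (auto intro!: AE_pmfI simp: real_step')
  show "integrable (Q x) (\<lambda>y. (real y)^2)"
    unfolding Q_eq integrable_map_pmf_eq using integrable_cong_AE[OF _ _ ae] isq by simp
  have "(\<integral>y. (real y)^2 \<partial>Q x) = (\<integral>d. (real (nat (int x + fst d)))^2 \<partial>nu x)" by (simp add: Q_eq)
  also have "\<dots> = (\<integral>d. (real x + real_of_int (fst d))^2 \<partial>nu x)" by (rule integral_cong_AE) (use ae in auto)
  also have "\<dots> = (real x)^2 + (2 * real x) * dr x + (\<integral>d. (real_of_int (fst d))^2 \<partial>nu x)"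
    unfolding exp using i2 int_fst by (simp add: dr_def)
  also have "\<dots> = (real x)^2 + 2 * real x * m1 + sig" using x by (simp add: dr_ge sig_def nx)
  finally show "(\<integral>y. (real y)^2 \<partial>Q x) = (real x)^2 + 2 * real x * m1 + sig" .
qed

end

lemma SUP_Suc_incseq: "incseq f \<Longrightarrow> (SUP t. f (Suc t)) = (SUP t. f t :: 'a::complete_lattice)"
  by (rule antisym; rule SUP_mono) (auto dest: incseq_SucD)

context rw1
begin

primrec Hit :: "nat \<Rightarrow> nat \<Rightarrow> nat \<Rightarrow> ennreal" where
  "Hit j 0 = (\<lambda>x. 0)"
| "Hit j (Suc t) = (\<lambda>x. if x = j then 0 else 1 + (\<integral>\<^sup>+y. Hit j t y \<partial>Q x))"

lemma Hit_Suc_le: "Hit j t x \<le> Hit j (Suc t) x"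
proof (induction t arbitrary: x)
  case 0 then show ?case by simp
next
  case (Suc t)
  have "(\<integral>\<^sup>+y. Hit j t y \<partial>Q x) \<le> (\<integral>\<^sup>+y. Hit j (Suc t) y \<partial>Q x)"
    by (intro nn_integral_mono Suc.IH)
  then show ?case by (simp add: add_left_mono)
qed

lemma Hit_incseq: "incseq (\<lambda>t. Hit j t)"
  by (intro incseq_SucI le_funI Hit_Suc_le)

lemma Hit_incseq': "incseq (\<lambda>t. Hit j t x)"
  using Hit_incseq[of j] by (auto simp: incseq_def le_fun_def)

lemma Hit_le: "Hit j t x \<le> of_nat t"
proof (induction t arbitrary: x)
  case 0 then show ?case by simp
next
  case (Suc t)
  have "(\<integral>\<^sup>+y. Hit j t y \<partial>Q x) \<le> (\<integral>\<^sup>+y. of_nat t \<partial>Q x)"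
    by (intro nn_integral_mono Suc.IH)
  also have "\<dots> = of_nat t" by (simp add: measure_pmf.emeasure_space_1)
  finally have "1 + (\<integral>\<^sup>+y. Hit j t y \<partial>Q x) \<le> 1 + of_nat t" by (rule add_left_mono)
  then show ?case by (simp add: add.commute)
qed

definition H :: "nat \<Rightarrow> nat \<Rightarrow> ennreal" where "H j x = (SUP t. Hit j t x)"

lemma QH_SUP: "(\<integral>\<^sup>+y. H j y \<partial>Q x) = (SUP t. \<integral>\<^sup>+y. Hit j t y \<partial>Q x)"
  unfolding H_def by (rule nn_integral_monotone_convergence_SUP[OF Hit_incseq]) simp

lemma H_eq: "H j x = (if x = j then 0 else 1 + (\<integral>\<^sup>+y. H j y \<partial>Q x))"
proof -
  have "H j x = (SUP t. Hit j (Suc t) x)"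
    unfolding H_def by (rule SUP_Suc_incseq[OF Hit_incseq', symmetric])
  also have "\<dots> = (if x = j then 0 else 1 + (\<integral>\<^sup>+y. H j y \<partial>Q x))"
  proof (cases "x = j")
    case True then show ?thesis by simp
  next
    case False
    have "(SUP t. Hit j (Suc t) x) = (SUP t. (\<integral>\<^sup>+y. Hit j t y \<partial>Q x) + 1)"
      using False by (simp add: add.commute)
    also have "\<dots> = (SUP t. (\<integral>\<^sup>+y. Hit j t y \<partial>Q x)) + 1"
      by (rule ennreal_SUP_add_left) simp
    finally show ?thesis using False by (simp add: QH_SUP add.commute)
  qed
  finally show ?thesis .
qed

lemma H_j: "H j j = 0" using H_eq[of j j] by simp

lemma Kac_t: "ennreal (pmf pi j) * (\<integral>\<^sup>+y. Hit j t y \<partial>Q j) \<le> ennreal (1 - pmf pi j)"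
proof -
  define QH where "QH x = (\<integral>\<^sup>+y. Hit j t y \<partial>Q x)" for x
  define I where "I t' = (\<integral>\<^sup>+x. Hit j t' x \<partial>pi)" for t'
  define X where "X = (\<integral>\<^sup>+x. indicator (- {j}) x * QH x \<partial>pi)"
  define E where "E = emeasure (measure_pmf pi) (- {j})"
  have a: "I (Suc t) = E + X"
  proof -
    have "I (Suc t) = (\<integral>\<^sup>+x. indicator (- {j}) x + indicator (- {j}) x * QH x \<partial>pi)"
      unfolding I_def QH_def by (intro nn_integral_cong) (auto split: split_indicator)
    also have "\<dots> = (\<integral>\<^sup>+x. indicator (- {j}) x \<partial>pi) + X"
      unfolding X_def by (rule nn_integral_add) auto
    finally show ?thesis unfolding E_def by simp
  qed
  have b: "I t = X + ennreal (pmf pi j) * QH j"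
  proof -
    have "I t = (\<integral>\<^sup>+x. QH x \<partial>pi)"
    proof -
      have "(\<integral>\<^sup>+x. QH x \<partial>pi) = (\<integral>\<^sup>+x. Hit j t x \<partial>bind_pmf pi Q)"
        unfolding QH_def by simp
      also have "bind_pmf pi Q = pi" using pi_inv unfolding invariant_distr_def .
      finally show ?thesis unfolding I_def by simp
    qed
    also have "\<dots> = (\<integral>\<^sup>+x. indicator (- {j}) x * QH x + QH j * indicator {j} x \<partial>pi)"
      by (intro nn_integral_cong) (auto split: split_indicator)
    also have "\<dots> = X + (\<integral>\<^sup>+x. QH j * indicator {j} x \<partial>pi)"
      unfolding X_def by (rule nn_integral_add) auto
    also have "(\<integral>\<^sup>+x. QH j * indicator {j} x \<partial>pi) = QH j * ennreal (pmf pi j)"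
      by (simp add: nn_integral_cmult_indicator emeasure_pmf_single)
    finally show ?thesis by (simp add: mult.commute)
  qed
  have mono: "I t \<le> I (Suc t)" unfolding I_def by (intro nn_integral_mono Hit_Suc_le)
  have fin: "I (Suc t) \<noteq> \<infinity>"
  proof -
    have "I (Suc t) \<le> (\<integral>\<^sup>+x. of_nat (Suc t) \<partial>pi)" unfolding I_def by (intro nn_integral_mono Hit_le)
    also have "\<dots> = of_nat (Suc t)" by (simp add: measure_pmf.emeasure_space_1)
    finally show ?thesis by (auto simp: top_unique)
  qed
  have "I (Suc t) + ennreal (pmf pi j) * QH j = E + I t" using a b by (simp add: add_ac)
  also have "\<dots> \<le> E + I (Suc t)" using mono by (rule add_left_mono)
  finally have "I (Suc t) + ennreal (pmf pi j) * QH j \<le> I (Suc t) + E" by (simp add: add_ac)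
  then have "ennreal (pmf pi j) * QH j \<le> E" using fin by (simp add: ennreal_add_left_cancel_le)
  also have "E = ennreal (1 - pmf pi j)"
  proof -
    have "E = ennreal (measure (measure_pmf pi) (UNIV - {j}))"
      unfolding E_def by (simp add: measure_pmf.emeasure_eq_measure Compl_eq_Diff_UNIV)
    also have "measure (measure_pmf pi) (UNIV - {j}) = 1 - pmf pi j"
      using measure_pmf.prob_compl[of "{j}" pi] by (simp add: measure_pmf_single)
    finally show ?thesis .
  qed
  finally show ?thesis unfolding QH_def .
qed

lemma Kac: "ennreal (pmf pi j) * (\<integral>\<^sup>+y. H j y \<partial>Q j) \<le> ennreal (1 - pmf pi j)"
  unfolding QH_SUP SUP_mult_left_ennreal by (rule SUP_least) (rule Kac_t)

lemma QH_j_fin: "(\<integral>\<^sup>+y. H j y \<partial>Q j) < \<top>"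
proof (rule ccontr)
  assume "\<not> (\<integral>\<^sup>+y. H j y \<partial>Q j) < \<top>"
  then have "(\<integral>\<^sup>+y. H j y \<partial>Q j) = \<top>" by (metis less_top)
  then have "ennreal (pmf pi j) * (\<integral>\<^sup>+y. H j y \<partial>Q j) = \<top>" using pi_pos[of j] by (simp add: ennreal_mult_top)
  then show False using Kac[of j] by (simp add: top_unique)
qed

lemma QH_fin: "(\<integral>\<^sup>+y. H j y \<partial>Q x) < \<top>"
proof -
  have "(j, x) \<in> {(u, v). pmf (Q u) v > 0}\<^sup>*" by (rule Q_irr)
  then show ?thesis
  proof (induction rule: rtrancl_induct)
    case base then show ?case by (rule QH_j_fin)
  next
    case (step u v)
    have pos: "pmf (Q u) v > 0" using step(2) by simp
    have "ennreal (pmf (Q u) v) * H j v \<le> (\<integral>\<^sup>+y. H j y \<partial>Q u)" by (rule pmf_le_nn_integral)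
    also have "\<dots> < \<top>" by (rule step(3))
    finally have Hv: "H j v < \<top>" using pos by (auto simp: ennreal_mult_less_top)
    show ?case
    proof (cases "v = j")
      case True then show ?thesis using QH_j_fin by simp
    next
      case False
      then have "H j v = 1 + (\<integral>\<^sup>+y. H j y \<partial>Q v)" using H_eq[of j v] by simp
      then show ?thesis using Hv by (auto simp: top.not_eq_extremum)
    qed
  qed
qed

lemma H_fin: "H j x < \<top>"
  using H_eq[of j x] QH_fin[where j=j and x=x] by (auto simp: top.not_eq_extremum)

definition h :: "nat \<Rightarrow> nat \<Rightarrow> real" where "h j x = enn2real (H j x)"

lemma H_h: "H j x = ennreal (h j x)"
  unfolding h_def using H_fin[of j x] by (simp add: less_top)

lemma h_nonneg: "0 \<le> h j x" unfolding h_def by simp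

lemma h_j: "h j j = 0" unfolding h_def by (simp add: H_j)

lemma h_int: "integrable (Q x) (h j)"
proof (rule integrableI_nonneg)
  show "AE y in Q x. 0 \<le> h j y" by (simp add: h_nonneg)
  show "(\<integral>\<^sup>+y. ennreal (h j y) \<partial>Q x) < \<infinity>" using QH_fin[where j=j and x=x] by (simp add: H_h)
qed simp

lemma QH_eq: "(\<integral>\<^sup>+y. H j y \<partial>Q x) = ennreal (\<integral>y. h j y \<partial>Q x)"
  unfolding H_h by (rule nn_integral_eq_integral[OF h_int]) (simp add: h_nonneg)

lemma h_eq: "x \<noteq> j \<Longrightarrow> h j x = 1 + (\<integral>y. h j y \<partial>Q x)"
proof -
  assume x: "x \<noteq> j"
  have "ennreal (h j x) = 1 + ennreal (\<integral>y. h j y \<partial>Q x)"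
    using H_eq[of j x] x by (simp add: H_h[symmetric] QH_eq[symmetric])
  also have "\<dots> = ennreal (1 + (\<integral>y. h j y \<partial>Q x))"
    by (simp add: integral_nonneg_AE h_nonneg)
  finally show ?thesis
    by (subst (asm) ennreal_inj) (auto simp: h_nonneg integral_nonneg_AE)
qed

lemma Qh_nonneg: "0 \<le> (\<integral>y. h j y \<partial>Q x)" by (simp add: integral_nonneg_AE h_nonneg)

lemma Kac_real: "pmf pi j * (1 + (\<integral>y. h j y \<partial>Q j)) \<le> 1"
proof -
  have "ennreal (pmf pi j * (\<integral>y. h j y \<partial>Q j)) = ennreal (pmf pi j) * ennreal (\<integral>y. h j y \<partial>Q j)"
    by (rule ennreal_mult) (auto simp: Qh_nonneg)
  also have "\<dots> \<le> ennreal (1 - pmf pi j)"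
    using Kac[of j] by (simp add: QH_eq)
  finally have "pmf pi j * (\<integral>y. h j y \<partial>Q j) \<le> 1 - pmf pi j"
    by (subst (asm) ennreal_le_iff) (auto simp: pmf_le_1)
  then show ?thesis by (simp add: algebra_simps)
qed

end

context rw1
begin

lemma mu_supp: "d \<in> set_pmf mu \<Longrightarrow> - real k0 \<le> real_of_int (fst d)"
  using nu_supp(2)[of d k0] by (simp add: nu_def)

lemma m1_ge: "- real k0 \<le> m1"
proof -
  have ae: "AE d in mu. - real k0 \<le> real_of_int (fst d)" by (rule AE_pmfI) (rule mu_supp)
  have "(\<integral>d. - real k0 \<partial>mu) \<le> (\<integral>d. real_of_int (fst d) \<partial>mu)"
    using int_fst[of k0] ae by (intro integral_mono_AE) (auto simp: nu_def)
  then show ?thesis unfolding m1_def by simp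
qed

definition Mj :: "nat \<Rightarrow> real" where "Mj j = (\<Sum>i\<le>k0+j. h j i)"

lemma h_le_Mj: "x \<le> k0 + j \<Longrightarrow> h j x \<le> Mj j"
  unfolding Mj_def by (rule member_le_sum) (auto simp: h_nonneg)

lemma Mj_nonneg: "0 \<le> Mj j" unfolding Mj_def by (simp add: sum_nonneg h_nonneg)

lemma Hit_le_H: "Hit j t x \<le> H j x"
  unfolding H_def by (rule SUP_upper) simp

lemma h_upper: "h j x \<le> real x / (- m1) + Mj j"
proof -
  define a where "a = - m1"
  have a: "0 < a" unfolding a_def using m1_neg' by simp
  have "Hit j t x \<le> ennreal (real x / a + Mj j)" for t x
  proof (induction t arbitrary: x)
    case 0 then show ?case by simp
  next
    case (Suc t)
    show ?case
    proof (cases "x \<le> k0 + j")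
      case True
      have "Hit j (Suc t) x \<le> H j x" by (rule Hit_le_H)
      also have "\<dots> = ennreal (h j x)" by (rule H_h)
      also have "\<dots> \<le> ennreal (real x / a + Mj j)"
        using h_le_Mj[OF True] a by (intro ennreal_leI) (simp add: add_increasing)
      finally show ?thesis .
    next
      case False
      then have xj: "x \<noteq> j" and xk: "k0 \<le> x" by auto
      have "(\<integral>\<^sup>+y. Hit j t y \<partial>Q x) \<le> (\<integral>\<^sup>+y. ennreal (real y / a + Mj j) \<partial>Q x)"
        by (intro nn_integral_mono Suc.IH)
      also have "\<dots> = ennreal (\<integral>y. real y / a + Mj j \<partial>Q x)"
      proof (rule nn_integral_eq_integral)
        show "integrable (Q x) (\<lambda>y. real y / a + Mj j)"
          using Q_lin(1)[of x] by simp
      qed (use a Mj_nonneg in auto)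
      also have "(\<integral>y. real y / a + Mj j \<partial>Q x) = (real x + m1) / a + Mj j"
        using Q_lin[of x] dr_ge[OF xk] by simp
      also have "\<dots> = real x / a + Mj j - 1" using a unfolding a_def by (simp add: field_simps)
      finally have I: "(\<integral>\<^sup>+y. Hit j t y \<partial>Q x) \<le> ennreal (real x / a + Mj j - 1)" .
      have "Hit j (Suc t) x = 1 + (\<integral>\<^sup>+y. Hit j t y \<partial>Q x)" using xj by simp
      also have "\<dots> \<le> 1 + ennreal (real x / a + Mj j - 1)" using I by (rule add_left_mono)
      also have "\<dots> \<le> ennreal (real x / a + Mj j)"
      proof (cases "0 \<le> real x / a + Mj j - 1")
        case True
        have "ennreal (1 + (real x / a + Mj j - 1)) = ennreal 1 + ennreal (real x / a + Mj j - 1)"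
          by (rule ennreal_plus) (use True in auto)
        then show ?thesis by simp
      next
        case False
        then have "ennreal (real x / a + Mj j - 1) = 0" by (simp add: ennreal_eq_0_iff)
        moreover have "1 \<le> real x / a + Mj j" 
        proof -
          have "real k0 \<le> real x" using xk by simp
          have "- m1 \<le> real k0"
          proof -
            show ?thesis using m1_ge by simp
          qed
          then have "1 \<le> real x / a" using a xk unfolding a_def by (simp add: field_simps)
          then show ?thesis using Mj_nonneg[of j] by simp
        qed
        ultimately show ?thesis using ennreal_leI[of 1 "real x / a + Mj j"] by simp
      qed
      finally show ?thesis .
    qed
  qed
  then have "H j x \<le> ennreal (real x / a + Mj j)" unfolding H_def by (intro SUP_least) auto
  then have "ennreal (h j x) \<le> ennreal (real x / a + Mj j)" by (simp add: H_h)
  then have "h j x \<le> real x / a + Mj j"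
    using a Mj_nonneg[of j] by (subst (asm) ennreal_le_iff) auto
  then show ?thesis unfolding a_def .
qed

lemma neg_atom: "\<exists>d \<in> set_pmf mu. fst d < 0"
proof (rule ccontr)
  assume "\<not> (\<exists>d \<in> set_pmf mu. fst d < 0)"
  then have "AE d in mu. 0 \<le> real_of_int (fst d)" by (auto intro!: AE_pmfI simp: not_less)
  then have "0 \<le> m1" unfolding m1_def by (rule integral_nonneg_AE)
  then show False using m1_neg' by simp
qed

lemma max_principle:
  fixes f :: "nat \<Rightarrow> real"
  assumes low: "\<And>y. real y \<le> Kr \<Longrightarrow> f y \<le> 0"
    and far: "\<And>y. real y > N \<Longrightarrow> f y \<le> 0"
    and sub: "\<And>y. real y > Kr \<Longrightarrow> integrable (Q y) f \<and> f y \<le> (\<integral>z. f z \<partial>Q y)"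
    and KK: "real k0 \<le> Kr"
  shows "f x \<le> 0"
proof (rule ccontr)
  assume "\<not> f x \<le> 0"
  then have fx: "0 < f x" by simp
  define S where "S = {y. y \<le> nat \<lceil>N\<rceil> \<and> 0 < f y}"
  have finS: "finite S" unfolding S_def by simp
  have xN: "x \<le> nat \<lceil>N\<rceil>"
  proof (rule ccontr)
    assume "\<not> x \<le> nat \<lceil>N\<rceil>"
    then have "real x > N" by linarith
    then show False using far[of x] fx by simp
  qed
  have xS: "x \<in> S" unfolding S_def using xN fx by simp
  define v where "v = Max (f ` S)"
  have fv: "f y \<le> v" for y
  proof (cases "y \<in> S")
    case True then show ?thesis unfolding v_def using finS by simp
  next
    case False
    have "f y \<le> 0"
    proof (cases "y \<le> nat \<lceil>N\<rceil>")
      case True then show ?thesis using False unfolding S_def by simp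
    next
      case False
      then have "real y > N" by linarith
      then show ?thesis using far by simp
    qed
    also have "0 < f x" by (rule fx)
    also have "f x \<le> v" unfolding v_def using finS xS by simp
    finally show ?thesis by simp
  qed
  have vpos: "0 < v" using fv[of x] fx by simp
  define T where "T = {y \<in> S. f y = v}"
  have vin: "v \<in> f ` S" unfolding v_def using finS xS by (intro Max_in) auto
  have finT: "finite T" and neT: "T \<noteq> {}" unfolding T_def using finS vin by auto
  define xs where "xs = Min T"
  have xsT: "xs \<in> T" unfolding xs_def using finT neT by (rule Min_in)
  have fxs: "f xs = v" and xsS: "xs \<in> S" using xsT unfolding T_def by auto
  have xsK: "real xs > Kr"
  proof (rule ccontr)
    assume "\<not> real xs > Kr"
    then have "f xs \<le> 0" using low by simp
    then show False using fxs vpos by simp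
  qed
  have xk: "k0 \<le> xs" using xsK KK by linarith
  have intf: "integrable (Q xs) f" and subxs: "f xs \<le> (\<integral>z. f z \<partial>Q xs)" using sub[OF xsK] by auto
  have int2: "integrable (Q xs) (\<lambda>z. v - f z)" using intf by simp
  have "(\<integral>z. v - f z \<partial>Q xs) = v - (\<integral>z. f z \<partial>Q xs)" using intf by simp
  also have "\<dots> \<le> 0" using subxs fxs by simp
  finally have le0: "(\<integral>z. v - f z \<partial>Q xs) \<le> 0" .
  have ge0: "AE z in Q xs. 0 \<le> v - f z" using fv by simp
  have "(\<integral>z. v - f z \<partial>Q xs) = 0" using le0 integral_nonneg_AE[OF ge0] by simp
  then have "AE z in Q xs. v - f z = 0" using integral_nonneg_eq_0_iff_AE[OF int2 ge0] by simp
  then have eqv: "\<And>z. z \<in> set_pmf (Q xs) \<Longrightarrow> f z = v" by (simp add: AE_measure_pmf_iff)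
  obtain d0 where d0: "d0 \<in> set_pmf mu" "fst d0 < 0" using neg_atom by blast
  have d0nu: "d0 \<in> set_pmf (nu xs)" using d0 xk by (simp add: nu_def)
  define y0 where "y0 = nat (int xs + fst d0)"
  have y0Q: "y0 \<in> set_pmf (Q xs)" unfolding y0_def Q_eq using d0nu by auto
  have "real y0 = real xs + real_of_int (fst d0)" unfolding y0_def by (rule real_step[OF d0nu])
  then have y0lt: "y0 < xs" using d0(2) by linarith
  have fy0: "f y0 = v" by (rule eqv[OF y0Q])
  have "y0 \<in> T" unfolding T_def S_def using fy0 vpos y0lt xsS unfolding S_def by auto
  then have "xs \<le> y0" unfolding xs_def using finT by simp
  then show False using y0lt by simp
qed

definition Kr :: "nat \<Rightarrow> real" where "Kr j = real (k0 + j) + \<bar>sig\<bar> / (2 * (- m1))"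

lemma Kr_ge: "real (k0 + j) \<le> Kr j"
proof -
  have "0 \<le> \<bar>sig\<bar> / (2 * (- m1))" by (rule divide_nonneg_pos) (use m1_neg' in auto)
  then show ?thesis unfolding Kr_def by linarith
qed

lemma Kr_nonneg: "0 \<le> Kr j"
proof -
  have "0 \<le> \<bar>sig\<bar> / (2 * (- m1))" by (rule divide_nonneg_pos) (use m1_neg' in auto)
  then show ?thesis unfolding Kr_def by simp
qed

lemma h_lower: "(real x - Kr j) / (- m1) \<le> h j x"
proof (rule ccontr)
  define a where "a = - m1"
  have a: "0 < a" unfolding a_def using m1_neg' by simp
  assume "\<not> (real x - Kr j) / (- m1) \<le> h j x"
  then have Dpos: "0 < (real x - Kr j) / a - h j x" unfolding a_def by simp
  define D where "D = (real x - Kr j) / a - h j x"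
  have D: "0 < D" using Dpos unfolding D_def .
  define e where "e = D / (2 * (real x)^2 + 1)"
  have "0 \<le> 2 * (real x)^2" by simp
  then have den: "0 < 2 * (real x)^2 + 1" by linarith
  then have e: "0 < e" unfolding e_def using D by (intro divide_pos_pos)
  define f where "f y = (real y - Kr j) / a - h j y - e * (real y)^2" for y
  have fx: "0 < f x"
  proof -
    have "e * (real x)^2 < D"
    proof -
      have "e * (real x)^2 = D * ((real x)^2 / (2 * (real x)^2 + 1))" unfolding e_def by simp
      also have "\<dots> < D * 1"
      proof -
        have "0 \<le> (real x)^2" by simp
        then have "(real x)^2 / (2 * (real x)^2 + 1) < 1" using den by (subst divide_less_eq_1_pos) auto
        then show ?thesis using D by (intro mult_strict_left_mono) auto
      qed
      finally show ?thesis by simp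
    qed
    then show ?thesis unfolding f_def D_def by simp
  qed
  have "f x \<le> 0"
  proof (rule max_principle[where Kr="Kr j" and N="1 / (a * e)"])
    fix y assume "real y \<le> Kr j"
    then have "(real y - Kr j) / a \<le> 0" using a by (simp add: divide_nonpos_pos)
    moreover have "0 \<le> e * (real y)^2" using e by simp
    ultimately show "f y \<le> 0" unfolding f_def using h_nonneg[of j y] by linarith
  next
    fix y assume y: "real y > 1 / (a * e)"
    have ye: "1 < a * e * real y" using y a e by (simp add: field_simps)
    have "(real y - Kr j) / a \<le> real y / a" using Kr_nonneg[of j] a by (simp add: divide_right_mono)
    also have "real y / a \<le> e * (real y)^2"
    proof -
      have "real y * 1 \<le> real y * (a * e * real y)" using ye by (intro mult_left_mono) auto
      then show ?thesis using a by (simp add: field_simps power2_eq_square)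
    qed
    finally show "f y \<le> 0" unfolding f_def using h_nonneg[of j y] by simp
  next
    fix y assume y: "real y > Kr j"
    have "real (k0 + j) < real y" using y Kr_ge[of j] by linarith
    then have yk: "k0 \<le> y" and yj: "y \<noteq> j" by auto
    have ysig: "sig \<le> 2 * a * real y"
    proof -
      have "\<bar>sig\<bar> / (2 * a) < real y" using y unfolding Kr_def a_def by simp
      then have "\<bar>sig\<bar> < 2 * a * real y" using a by (simp add: field_simps)
      then show ?thesis by simp
    qed
    have i1: "integrable (Q y) real" by (rule Q_lin(1))
    have i2: "integrable (Q y) (h j)" by (rule h_int)
    have i3: "integrable (Q y) (\<lambda>z. (real z)^2)" by (rule Q_sq(1)[OF yk])
    have intf: "integrable (Q y) f" unfolding f_def using i1 i2 i3 by (simp add: diff_divide_distrib)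
    have "(\<integral>z. f z \<partial>Q y) = ((\<integral>z. real z \<partial>Q y) - Kr j) / a - (\<integral>z. h j z \<partial>Q y) - e * (\<integral>z. (real z)^2 \<partial>Q y)"
      unfolding f_def using i1 i2 i3 by (simp add: diff_divide_distrib)
    also have "\<dots> = ((real y + m1) - Kr j) / a - (h j y - 1) - e * ((real y)^2 + 2 * real y * m1 + sig)"
      using Q_lin(2)[of y] dr_ge[OF yk] h_eq[OF yj] Q_sq(2)[OF yk] by simp
    also have "\<dots> = f y - e * (sig - 2 * a * real y)"
      unfolding f_def a_def using m1_neg' by (simp add: field_simps)
    finally have eqI: "(\<integral>z. f z \<partial>Q y) = f y - e * (sig - 2 * a * real y)" .
    have "e * (sig - 2 * a * real y) \<le> 0" using e ysig by (simp add: mult_nonneg_nonpos)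
    then show "integrable (Q y) f \<and> f y \<le> (\<integral>z. f z \<partial>Q y)" using intf eqI by simp
  next
    have "0 \<le> \<bar>sig\<bar> / (2 * (- m1))" by (rule divide_nonneg_pos) (use m1_neg' in auto)
    then show "real k0 \<le> Kr j" unfolding Kr_def by simp
  qed
  then show False using fx by simp
qed

end

context rw1
begin

lemma P1_integral:
  fixes G :: "nat \<times> int \<Rightarrow> real"
  shows "(\<integral>s'. G s' \<partial>P1 s) = (\<integral>d. G (nat (int (fst s) + fst d), snd s + snd d) \<partial>nu (fst s))"
  by (simp add: P1_eq)

lemma P1_integrable:
  fixes G :: "nat \<times> int \<Rightarrow> real"
  shows "integrable (P1 s) G \<longleftrightarrow> integrable (nu (fst s)) (\<lambda>d. G (nat (int (fst s) + fst d), snd s + snd d))"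
  by (simp add: P1_eq)

definition Rj :: "nat \<Rightarrow> real" where "Rj j = Kr j / (- m1) + Mj j"

lemma h_near_lin: "\<bar>h j y - real y / (- m1)\<bar> \<le> Rj j"
proof -
  have a: "0 < - m1" using m1_neg' by simp
  have l: "(real y - Kr j) / (- m1) \<le> h j y" by (rule h_lower)
  have u: "h j y \<le> real y / (- m1) + Mj j" by (rule h_upper)
  have "(real y - Kr j) / (- m1) = real y / (- m1) - Kr j / (- m1)" by (simp add: diff_divide_distrib)
  moreover have "0 \<le> Kr j / (- m1)" by (rule divide_nonneg_pos) (use Kr_nonneg a in auto)
  ultimately show ?thesis using l u Mj_nonneg[of j] unfolding Rj_def by (simp add: abs_le_iff)
qed

lemma Qh_near: "\<bar>(\<integral>y. h j y \<partial>Q x) - (real x + dr x) / (- m1)\<bar> \<le> Rj j"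
proof -
  have "(\<integral>y. h j y \<partial>Q x) - (real x + dr x) / (- m1) = (\<integral>y. h j y - real y / (- m1) \<partial>Q x)"
    using h_int[of x j] Q_lin[of x] by simp
  also have "\<bar>\<dots>\<bar> \<le> (\<integral>y. \<bar>h j y - real y / (- m1)\<bar> \<partial>Q x)" by (rule integral_abs_bound)
  also have "\<dots> \<le> (\<integral>y. Rj j \<partial>Q x)"
    by (rule integral_mono) (use h_int[of x j] Q_lin(1)[of x] h_near_lin in auto)
  finally show ?thesis by simp
qed

definition Fh :: "nat \<Rightarrow> nat \<times> int \<Rightarrow> nat \<times> int \<Rightarrow> real" where
  "Fh j s s' = h j (fst s') - (\<integral>y. h j y \<partial>Q (fst s))"

lemma Fh_bound:
  assumes d: "d \<in> set_pmf (nu x)"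
  shows "\<bar>h j (nat (int x + fst d)) - (\<integral>y. h j y \<partial>Q x)\<bar> \<le>
    (2 * Rj j + D0 / (- m1)) + (1 / (- m1)) * (\<bar>real_of_int (fst d)\<bar> + \<bar>real_of_int (snd d)\<bar>)"
proof -
  define c where "c = 1 / (- m1)"
  have c: "0 < c" unfolding c_def using m1_neg' by simp
  define y where "y = nat (int x + fst d)"
  have ry: "real y = real x + real_of_int (fst d)" unfolding y_def by (rule real_step[OF d])
  have e1: "\<bar>h j y - real y * c\<bar> \<le> Rj j" using h_near_lin[of j y] unfolding c_def by simp
  have e2: "\<bar>(\<integral>y. h j y \<partial>Q x) - (real x + dr x) * c\<bar> \<le> Rj j" using Qh_near[where j=j and x=x] unfolding c_def by simp
  have e3: "\<bar>real_of_int (fst d) - dr x\<bar> \<le> \<bar>real_of_int (fst d)\<bar> + D0" using dr_bound[of x] by linarith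
  have "h j y - (\<integral>y. h j y \<partial>Q x) = (h j y - real y * c) + c * (real_of_int (fst d) - dr x) - ((\<integral>y. h j y \<partial>Q x) - (real x + dr x) * c)"
    using ry by (simp add: algebra_simps)
  then have "\<bar>h j y - (\<integral>y. h j y \<partial>Q x)\<bar> \<le> Rj j + c * (\<bar>real_of_int (fst d)\<bar> + D0) + Rj j"
  proof -
    have "\<bar>c * (real_of_int (fst d) - dr x)\<bar> \<le> c * (\<bar>real_of_int (fst d)\<bar> + D0)"
      using e3 c by (simp add: abs_mult mult_left_mono)
    then show ?thesis using e1 e2 \<open>h j y - _ = _\<close> by linarith
  qed
  also have "\<dots> \<le> (2 * Rj j + D0 * c) + c * (\<bar>real_of_int (fst d)\<bar> + \<bar>real_of_int (snd d)\<bar>)"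
    using c by (simp add: algebra_simps)
  finally show ?thesis unfolding y_def c_def by (simp add: mult.commute)
qed

lemma Rj_nonneg: "0 \<le> Rj j"
proof -
  have "0 \<le> Kr j / (- m1)" by (rule divide_nonneg_pos) (use Kr_nonneg m1_neg' in auto)
  then show ?thesis using Mj_nonneg[of j] unfolding Rj_def by simp
qed

lemma Fh_conds:
  shows "integrable (P1 s) (\<lambda>s'. Fh j s s' ^ 4)"
    "(\<integral>s'. Fh j s s' \<partial>P1 s) = 0"
    "(\<integral>s'. Fh j s s' ^ 4 \<partial>P1 s) \<le> 8 * (2 * Rj j + D0 / (- m1))^4 + 8 * (1 / (- m1))^4 * B0"
proof -
  obtain x y where s: "s = (x, y)" by force
  have "0 \<le> D0 / (- m1)" by (rule divide_nonneg_pos) (use D0_pos m1_neg' in auto)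
  then have al: "0 \<le> 2 * Rj j + D0 / (- m1)" using Rj_nonneg[of j] by linarith
  have be: "0 \<le> 1 / (- m1)" using m1_neg' by simp
  note ab = affine_bound[where G="\<lambda>d. h j (nat (int x + fst d)) - (\<integral>y. h j y \<partial>Q x)" and x=x, OF Fh_bound al be]
  show "integrable (P1 s) (\<lambda>s'. Fh j s s' ^ 4)"
    using ab(1) unfolding P1_integrable s Fh_def by simp
  show "(\<integral>s'. Fh j s s' ^ 4 \<partial>P1 s) \<le> 8 * (2 * Rj j + D0 / (- m1))^4 + 8 * (1 / (- m1))^4 * B0"
    using ab(2) unfolding P1_integral s Fh_def by simp
  have "(\<integral>s'. Fh j s s' \<partial>P1 s) = (\<integral>d. h j (nat (int x + fst d)) - (\<integral>y. h j y \<partial>Q x) \<partial>nu x)"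
    unfolding P1_integral s Fh_def by simp
  also have "\<dots> = (\<integral>d. h j (nat (int x + fst d)) \<partial>nu x) - (\<integral>y. h j y \<partial>Q x)"
    using ab(3) h_int[of x j] by (simp add: Q_eq)
  also have "(\<integral>d. h j (nat (int x + fst d)) \<partial>nu x) = (\<integral>y. h j y \<partial>Q x)" by (simp add: Q_eq)
  finally show "(\<integral>s'. Fh j s s' \<partial>P1 s) = 0" by simp
qed

definition FY :: "nat \<times> int \<Rightarrow> nat \<times> int \<Rightarrow> real" where
  "FY s s' = real_of_int (snd s' - snd s) - gY (fst s)"

lemma FY_conds:
  shows "integrable (P1 s) (\<lambda>s'. FY s s' ^ 4)"
    "(\<integral>s'. FY s s' \<partial>P1 s) = 0"
    "(\<integral>s'. FY s s' ^ 4 \<partial>P1 s) \<le> 8 * D0^4 + 8 * 1^4 * B0"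
proof -
  obtain x y where s: "s = (x, y)" by force
  have bd: "\<bar>real_of_int (snd d) - gY x\<bar> \<le> D0 + 1 * (\<bar>real_of_int (fst d)\<bar> + \<bar>real_of_int (snd d)\<bar>)" for d
    using gY_bound[of x] abs_triangle_ineq4[of "real_of_int (snd d)" "gY x"] abs_ge_zero[of "real_of_int (fst d)"] by simp
  note ab = affine_bound[where G="\<lambda>d. real_of_int (snd d) - gY x" and x=x and \<alpha>=D0 and \<beta>=1, OF bd]
  have ab1: "integrable (nu x) (\<lambda>d. (real_of_int (snd d) - gY x)^4)" and ab2: "(\<integral>d. (real_of_int (snd d) - gY x)^4 \<partial>nu x) \<le> 8 * D0^4 + 8 * 1^4 * B0"
    and ab3: "integrable (nu x) (\<lambda>d. real_of_int (snd d) - gY x)"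
    using ab D0_pos by auto
  show "integrable (P1 s) (\<lambda>s'. FY s s' ^ 4)"
    using ab1 unfolding P1_integrable s FY_def by simp
  show "(\<integral>s'. FY s s' ^ 4 \<partial>P1 s) \<le> 8 * D0^4 + 8 * 1^4 * B0"
    using ab2 unfolding P1_integral s FY_def by simp
  have "(\<integral>s'. FY s s' \<partial>P1 s) = (\<integral>d. real_of_int (snd d) - gY x \<partial>nu x)"
    unfolding P1_integral s FY_def by simp
  also have "\<dots> = 0" using int_snd[of x] by (simp add: gY_def)
  finally show "(\<integral>s'. FY s s' \<partial>P1 s) = 0" .
qed

end

lemma lower_freq:
  fixes u ind :: "nat \<Rightarrow> real"
  assumes lim: "(\<lambda>n. (\<Sum>m<n. u (Suc m) - u m + 1 - c * ind m) / real n) \<longlonglongrightarrow> 0"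
    and u0: "\<And>m. 0 \<le> u m" and c: "0 < c" and pc: "p * c \<le> 1" and e: "0 < e"
  shows "eventually (\<lambda>n. p - e \<le> (\<Sum>m<n. ind m) / real n) sequentially"
proof -
  define e' where "e' = e * c / 2"
  have e': "0 < e'" unfolding e'_def using e c by simp
  have sum_eq: "(\<Sum>m<n. u (Suc m) - u m + 1 - c * ind m) = u n - u 0 + real n - c * (\<Sum>m<n. ind m)" for n
    by (induction n) (auto simp: algebra_simps)
  have ev1: "eventually (\<lambda>n. \<bar>(\<Sum>m<n. u (Suc m) - u m + 1 - c * ind m) / real n\<bar> < e') sequentially"
    using lim e' by (auto simp: LIMSEQ_iff eventually_sequentially)
  have "(\<lambda>n. u 0 / real n) \<longlonglongrightarrow> 0" by (rule lim_const_over_n)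
  then have ev2: "eventually (\<lambda>n. \<bar>u 0 / real n\<bar> < e') sequentially"
    using e' by (auto simp: LIMSEQ_iff eventually_sequentially)
  show ?thesis
    using ev1 ev2 eventually_ge_at_top[of 1]
  proof eventually_elim
    case (elim n)
    have n: "0 < real n" using elim(3) by simp
    have A: "u n - u 0 + real n - c * (\<Sum>m<n. ind m) < e' * real n"
      using elim(1) n unfolding sum_eq by (simp add: abs_less_iff divide_less_eq)
    have B: "u 0 < e' * real n" using elim(2) n u0[of 0] by (simp add: abs_less_iff divide_less_eq)
    have C: "real n - c * (\<Sum>m<n. ind m) < e * c * real n"
      using A B u0[of n] unfolding e'_def by simp
    have "c * ((p - e) * real n) \<le> real n - e * c * real n"
    proof -
      have "c * ((p - e) * real n) = (p * c) * real n - e * c * real n" by (simp add: algebra_simps)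
      also have "\<dots> \<le> 1 * real n - e * c * real n" using pc n by (intro diff_right_mono mult_right_mono) auto
      finally show ?thesis by simp
    qed
    then have "c * ((p - e) * real n) < c * (\<Sum>m<n. ind m)" using C by simp
    then have "(p - e) * real n < (\<Sum>m<n. ind m)" using c by simp
    then show ?case using n by (simp add: le_divide_eq)
  qed
qed

lemma freq_limit:
  fixes Nf :: "nat \<Rightarrow> nat \<Rightarrow> real" and p :: "nat \<Rightarrow> real"
  assumes low: "\<And>j e. 0 < e \<Longrightarrow> eventually (\<lambda>n. p j - e \<le> Nf j n) sequentially"
    and tot: "\<And>n F. finite F \<Longrightarrow> (\<Sum>j\<in>F. Nf j n) \<le> 1"
    and ps: "p sums 1"
  shows "(\<lambda>n. Nf j n) \<longlonglongrightarrow> p j"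
proof (rule LIMSEQ_I)
  fix r :: real assume r: "0 < r"
  have "(\<lambda>m. \<Sum>i<m. p i) \<longlonglongrightarrow> 1" using ps by (simp add: sums_def)
  from LIMSEQ_D[OF this, of "r/2"] r obtain m0 where m0': "\<forall>m\<ge>m0. norm ((\<Sum>i<m. p i) - 1) < r / 2"
    by auto
  then have m0: "\<And>m. m \<ge> m0 \<Longrightarrow> \<bar>(\<Sum>i<m. p i) - 1\<bar> < r / 2" by auto
  define m where "m = max m0 (Suc j)"
  have jm: "j < m" unfolding m_def by simp
  have "\<bar>(\<Sum>i<m. p i) - 1\<bar> < r / 2" using m0[of m] unfolding m_def by simp
  then have pm: "1 - r / 2 < (\<Sum>i<m. p i)" by linarith
  define e' where "e' = r / (2 * real m)"
  have m_pos: "0 < real m" using jm by simp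
  have e': "0 < e'" unfolding e'_def using r m_pos by simp
  have evF: "eventually (\<lambda>n. \<forall>i\<in>{..<m}. p i - e' \<le> Nf i n) sequentially"
    by (rule eventually_ball_finite) (use low e' in auto)
  have evj: "eventually (\<lambda>n. p j - r / 2 \<le> Nf j n) sequentially"
    using low[of "r/2" j] r by simp
  have "eventually (\<lambda>n. dist (Nf j n) (p j) < r) sequentially"
    using evF evj
  proof eventually_elim
    case (elim n)
    have up: "Nf j n < p j + r"
    proof -
      have split: "(\<Sum>i<m. Nf i n) = Nf j n + (\<Sum>i\<in>{..<m} - {j}. Nf i n)"
        using jm by (subst sum.remove[of _ j]) auto
      have "(\<Sum>i\<in>{..<m} - {j}. p i - e') \<le> (\<Sum>i\<in>{..<m} - {j}. Nf i n)"
        using elim(1) by (intro sum_mono) auto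
      moreover have "(\<Sum>i\<in>{..<m} - {j}. p i - e') = (\<Sum>i<m. p i) - p j - real (m - 1) * e'"
      proof -
        have "(\<Sum>i\<in>{..<m} - {j}. p i - e') = (\<Sum>i\<in>{..<m} - {j}. p i) - real (m - 1) * e'"
          using jm by (simp add: sum_subtractf card_Diff_singleton)
        also have "(\<Sum>i\<in>{..<m} - {j}. p i) = (\<Sum>i<m. p i) - p j"
          using jm by (subst sum_diff1) auto
        finally show ?thesis .
      qed
      moreover have "real (m - 1) * e' \<le> r / 2"
      proof -
        have "real (m - 1) * e' \<le> real m * e'" using e' by (intro mult_right_mono) auto
        also have "\<dots> = r / 2" unfolding e'_def using m_pos by simp
        finally show ?thesis .
      qed
      moreover have "(\<Sum>i<m. Nf i n) \<le> 1" by (rule tot) simp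
      ultimately show ?thesis using split pm by linarith
    qed
    have lo: "p j - r < Nf j n" using elim(2) r by linarith
    show ?case using up lo by (simp add: dist_real_def abs_less_iff)
  qed
  then show "\<exists>no. \<forall>n\<ge>no. norm (Nf j n - p j) < r"
    by (auto simp: eventually_sequentially dist_real_def)
qed

context rw1
begin

lemma pi_sums: "(\<lambda>i. pmf pi i) sums 1"
proof -
  have "(\<Sum>i. ennreal (pmf pi i)) = 1"
    using nn_integral_count_space_nat[of "\<lambda>i. ennreal (pmf pi i)"] nn_integral_pmf[where p=pi and A=UNIV]
    by (simp add: measure_pmf.emeasure_space_1)
  then have "(\<lambda>i. ennreal (pmf pi i)) sums ennreal 1"
    using summable_sums[OF summableI[of "\<lambda>i. ennreal (pmf pi i)"]] by simp
  then show ?thesis by (subst (asm) sums_ennreal) auto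
qed

lemma Fh_rewrite:
  "Fh j s s' = h j (fst s') - h j (fst s) + 1 - (1 + (\<integral>y. h j y \<partial>Q j)) * (if fst s = j then 1 else 0)"
proof (cases "fst s = j")
  case True then show ?thesis by (simp add: Fh_def h_j)
next
  case False then show ?thesis by (simp add: Fh_def h_eq)
qed

lemma freq_AE:
  fixes Z :: "nat \<Rightarrow> 'w \<Rightarrow> nat \<times> int"
  assumes mc: "markov_chain_from M P1 (k, l) Z"
  shows "AE \<omega> in M. \<forall>j. (\<lambda>n. (\<Sum>m<n. if fst (Z m \<omega>) = j then 1 else 0) / real n) \<longlonglongrightarrow> pmf pi j"
proof -
  have each: "AE \<omega> in M. \<forall>e>0. eventually (\<lambda>n. pmf pi j - e \<le> (\<Sum>m<n. if fst (Z m \<omega>) = j then 1 else 0) / real n) sequentially" for j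
  proof -
    have "AE \<omega> in M. (\<lambda>n. (\<Sum>m<n. Fh j (Z m \<omega>) (Z (Suc m) \<omega>)) / real n) \<longlonglongrightarrow> 0"
      by (rule chain_mart_slln[OF mc Fh_conds(1) Fh_conds(2) Fh_conds(3)])
    then show ?thesis
    proof (rule AE_mp[OF _ AE_I2[OF impI]])
      fix \<omega> assume lim: "(\<lambda>n. (\<Sum>m<n. Fh j (Z m \<omega>) (Z (Suc m) \<omega>)) / real n) \<longlonglongrightarrow> 0"
      define c where "c = 1 + (\<integral>y. h j y \<partial>Q j)"
      have c: "0 < c" unfolding c_def using Qh_nonneg[of j j] by simp
      have pc: "pmf pi j * c \<le> 1" unfolding c_def by (rule Kac_real)
      have lim': "(\<lambda>n. (\<Sum>m<n. h j (fst (Z (Suc m) \<omega>)) - h j (fst (Z m \<omega>)) + 1 - c * (if fst (Z m \<omega>) = j then 1 else 0)) / real n) \<longlonglongrightarrow> 0"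
        using lim unfolding Fh_rewrite c_def .
      show "\<forall>e>0. eventually (\<lambda>n. pmf pi j - e \<le> (\<Sum>m<n. if fst (Z m \<omega>) = j then 1 else 0) / real n) sequentially"
        using lower_freq[OF lim' h_nonneg c pc] by blast
    qed
  qed
  have "AE \<omega> in M. \<forall>j. \<forall>e>0. eventually (\<lambda>n. pmf pi j - e \<le> (\<Sum>m<n. if fst (Z m \<omega>) = j then 1 else 0) / real n) sequentially"
    using each by (subst AE_all_countable) auto
  then show ?thesis
  proof (rule AE_mp[OF _ AE_I2[OF impI]])
    fix \<omega> assume low: "\<forall>j. \<forall>e>0. eventually (\<lambda>n. pmf pi j - e \<le> (\<Sum>m<n. if fst (Z m \<omega>) = j then 1 else 0) / real n) sequentially"
    define Nf where "Nf j n = (\<Sum>m<n. if fst (Z m \<omega>) = j then 1 else 0) / real n" for j n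
    have tot: "(\<Sum>j\<in>F. Nf j n) \<le> 1" if F: "finite F" for n F
    proof -
      have "(\<Sum>j\<in>F. (\<Sum>m<n. if fst (Z m \<omega>) = j then 1 else 0 :: real)) = (\<Sum>m<n. \<Sum>j\<in>F. if fst (Z m \<omega>) = j then 1 else 0)"
        by (rule sum.swap)
      also have "\<dots> \<le> (\<Sum>m<n. 1)"
      proof (rule sum_mono)
        fix m
        have "(\<Sum>j\<in>F. if fst (Z m \<omega>) = j then 1 else 0 :: real) = (if fst (Z m \<omega>) \<in> F then 1 else 0)"
          using F by (simp add: sum.delta)
        then show "(\<Sum>j\<in>F. if fst (Z m \<omega>) = j then 1 else 0 :: real) \<le> 1" by simp
      qed
      finally have "(\<Sum>j\<in>F. (\<Sum>m<n. if fst (Z m \<omega>) = j then 1 else 0 :: real)) \<le> real n" by simp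
      then show ?thesis unfolding Nf_def
        by (cases "n = 0") (auto simp: sum_divide_distrib[symmetric] divide_le_eq)
    qed
    show "\<forall>j. (\<lambda>n. (\<Sum>m<n. if fst (Z m \<omega>) = j then 1 else 0) / real n) \<longlonglongrightarrow> pmf pi j"
      using freq_limit[where Nf=Nf and p="\<lambda>j. pmf pi j", OF _ tot pi_sums] low unfolding Nf_def by blast
  qed
qed

end

context rw1
begin

lemma gY_decomp: "gY x = m2 + (\<Sum>i<k0. (gY i - m2) * (if x = i then 1 else 0))"
proof (cases "x < k0")
  case True
  then have "(\<Sum>i<k0. (gY i - m2) * (if x = i then 1 else 0)) = gY x - m2"
    by (simp add: if_distrib[of "\<lambda>t. (_::real) * t"] sum.delta' cong: if_cong)
  then show ?thesis by simp
next
  case False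
  then have "(\<Sum>i<k0. (gY i - m2) * (if x = i then 1 else 0)) = 0"
    by (intro sum.neutral) auto
  then show ?thesis using False gY_ge[of x] by simp
qed

definition Vlim :: real where "Vlim = m2 + (\<Sum>i<k0. (gY i - m2) * pmf pi i)"

lemma Y_AE:
  fixes Z :: "nat \<Rightarrow> 'w \<Rightarrow> nat \<times> int"
  assumes mc: "markov_chain_from M P1 (k, l) Z"
  shows "AE \<omega> in M. (\<lambda>n. real_of_int (snd (Z n \<omega>)) / real n) \<longlonglongrightarrow> Vlim"
proof -
  have A: "AE \<omega> in M. (\<lambda>n. (\<Sum>m<n. FY (Z m \<omega>) (Z (Suc m) \<omega>)) / real n) \<longlonglongrightarrow> 0"
    by (rule chain_mart_slln[OF mc FY_conds(1) FY_conds(2) FY_conds(3)])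
  have B: "AE \<omega> in M. Z 0 \<omega> = (k, l)" using mc unfolding markov_chain_from_def by auto
  have C: "AE \<omega> in M. \<forall>j. (\<lambda>n. (\<Sum>m<n. if fst (Z m \<omega>) = j then 1 else 0) / real n) \<longlonglongrightarrow> pmf pi j"
    by (rule freq_AE[OF mc])
  from A B C show ?thesis
  proof eventually_elim
    case (elim \<omega>)
    define Nc where "Nc i n = (\<Sum>m<n. if fst (Z m \<omega>) = i then 1 else 0 :: real)" for i n
    define S where "S n = (\<Sum>m<n. FY (Z m \<omega>) (Z (Suc m) \<omega>))" for n
    have sumg: "(\<Sum>m<n. gY (fst (Z m \<omega>))) = real n * m2 + (\<Sum>i<k0. (gY i - m2) * Nc i n)" for n
    proof -
      have "(\<Sum>m<n. gY (fst (Z m \<omega>))) = (\<Sum>m<n. m2 + (\<Sum>i<k0. (gY i - m2) * (if fst (Z m \<omega>) = i then 1 else 0)))"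
        by (subst gY_decomp) simp
      also have "\<dots> = real n * m2 + (\<Sum>m<n. \<Sum>i<k0. (gY i - m2) * (if fst (Z m \<omega>) = i then 1 else 0))"
        by (simp add: sum.distrib)
      also have "(\<Sum>m<n. \<Sum>i<k0. (gY i - m2) * (if fst (Z m \<omega>) = i then 1 else 0)) = (\<Sum>i<k0. (gY i - m2) * Nc i n)"
        unfolding Nc_def by (subst sum.swap) (simp add: sum_distrib_left)
      finally show ?thesis .
    qed
    have Seq: "S n = real_of_int (snd (Z n \<omega>)) - real_of_int l - (\<Sum>m<n. gY (fst (Z m \<omega>)))" for n
    proof (induction n)
      case 0 then show ?case using elim(2) by (simp add: S_def)
    next
      case (Suc n) then show ?case by (simp add: S_def FY_def)
    qed
    define R where "R n = S n / real n + real_of_int l / real n + m2 + (\<Sum>i<k0. (gY i - m2) * (Nc i n / real n))" for n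
    have LS: "(\<lambda>n. S n / real n) \<longlonglongrightarrow> 0" using elim(1) unfolding S_def .
    have LC: "(\<lambda>n. real_of_int l / real n) \<longlonglongrightarrow> 0" by (rule lim_const_over_n)
    have LN: "(\<lambda>n. Nc i n / real n) \<longlonglongrightarrow> pmf pi i" for i using elim(3) unfolding Nc_def by blast
    have LSum: "(\<lambda>n. \<Sum>i<k0. (gY i - m2) * (Nc i n / real n)) \<longlonglongrightarrow> (\<Sum>i<k0. (gY i - m2) * pmf pi i)"
      by (rule tendsto_sum) (rule tendsto_mult_left[OF LN])
    have R: "R \<longlonglongrightarrow> 0 + 0 + m2 + (\<Sum>i<k0. (gY i - m2) * pmf pi i)"
      unfolding R_def by (rule tendsto_add[OF tendsto_add[OF tendsto_add[OF LS LC] tendsto_const] LSum])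
    have ev: "eventually (\<lambda>n. R n = real_of_int (snd (Z n \<omega>)) / real n) sequentially"
      using eventually_ge_at_top[of 1]
    proof eventually_elim
      case (elim n)
      then have n: "real n \<noteq> 0" by simp
      have "real_of_int (snd (Z n \<omega>)) = S n + real_of_int l + real n * m2 + (\<Sum>i<k0. (gY i - m2) * Nc i n)"
        using Seq[of n] sumg[of n] by simp
      then have "real_of_int (snd (Z n \<omega>)) / real n = S n / real n + real_of_int l / real n + m2 + (\<Sum>i<k0. (gY i - m2) * Nc i n) / real n"
        using n by (simp add: add_divide_distrib)
      also have "(\<Sum>i<k0. (gY i - m2) * Nc i n) / real n = (\<Sum>i<k0. (gY i - m2) * (Nc i n / real n))"
        by (simp add: sum_divide_distrib)
      finally show ?case unfolding R_def by simp
    qed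
    show ?case using Lim_transform_eventually[OF R ev] unfolding Vlim_def by simp
  qed
qed

lemma V_sum: "(\<lambda>i. pmf pi i * gY i) sums Vlim"
proof -
  have a: "(\<lambda>i. pmf pi i * m2) sums (1 * m2)" by (rule sums_mult2[OF pi_sums])
  have b: "(\<lambda>i. pmf pi i * (gY i - m2)) sums (\<Sum>i\<in>{..<k0}. pmf pi i * (gY i - m2))"
    by (rule sums_finite) (auto simp: gY_ge)
  have "(\<lambda>i. pmf pi i * m2 + pmf pi i * (gY i - m2)) sums (1 * m2 + (\<Sum>i\<in>{..<k0}. pmf pi i * (gY i - m2)))"
    by (rule sums_add[OF a b])
  then show ?thesis unfolding Vlim_def by (simp add: algebra_simps mult.commute)
qed

end

theorem proposition2p2:
  fixes k0 :: nat
    and \<mu> :: "(int\<times>int) pmf"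
    and \<mu>' \<mu>'' :: "nat \<Rightarrow> (int\<times>int) pmf"
    and \<mu>ij :: "nat \<Rightarrow> nat \<Rightarrow> (int\<times>int) pmf"
    and \<delta> \<gamma> C :: real
    and \<pi>1 :: "nat pmf"
    and M :: "'w measure"
    and Z1 :: "nat \<Rightarrow> 'w \<Rightarrow> nat \<times> int"
    and k :: nat and l :: int
  assumes k0: "k0 \<ge> 1"
    (* (A1) *)
    and A1_mu: "\<And>a b. (a < - int k0 \<or> b < - int k0) \<Longrightarrow> pmf \<mu> (a, b) = 0"
    and A1_mu': "\<And>j a b. j < k0 \<Longrightarrow> (a < - int k0 \<or> b < - int j) \<Longrightarrow> pmf (\<mu>' j) (a, b) = 0"
    and A1_mu'': "\<And>i a b. i < k0 \<Longrightarrow> (b < - int k0 \<or> a < - int i) \<Longrightarrow> pmf (\<mu>'' i) (a, b) = 0"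
    and A1_muij: "\<And>i j a b. i < k0 \<Longrightarrow> j < k0 \<Longrightarrow> (a < - int i \<or> b < - int j) \<Longrightarrow> pmf (\<mu>ij i j) (a, b) = 0"
    (* (A2) *)
    and A2: "\<delta> > 0" "\<gamma> > 0" "C > 0"
      "\<And>i j. (\<integral>\<^sup>+ d. ennreal (exp (\<delta> * real_of_int (fst d) + \<gamma> * real_of_int (snd d)))
                 \<partial>measure_pmf (incZ k0 \<mu> \<mu>' \<mu>'' \<mu>ij (i, j))) \<le> ennreal C"
    (* (A3) *)
    and A3: "irreducible_kernel (trZ0 \<mu>)" "irreducible_kernel (trZ1 k0 \<mu> \<mu>'')"
      "irreducible_kernel (trZ2 k0 \<mu> \<mu>')" "irreducible_kernel (trZ k0 \<mu> \<mu>' \<mu>'' \<mu>ij)"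
    (* m1 < 0 *)
    and m1_neg: "measure_pmf.expectation \<mu> (\<lambda>d. real_of_int (fst d)) < 0"
    (* pi1 is the invariant distribution of X1 *)
    and pi1: "invariant_distr (trX1 k0 \<mu> \<mu>'') \<pi>1"
    (* Z1 is a realization of the chain Z1 under P_(k,l) *)
    and chain: "markov_chain_from M (trZ1 k0 \<mu> \<mu>'') (k, l) Z1"
  shows "(\<forall>i. integrable (measure_pmf (trZ1 k0 \<mu> \<mu>'' (i, 0))) (\<lambda>s. real_of_int (snd s)))
       \<and> summable (\<lambda>i. \<bar>pmf \<pi>1 i * measure_pmf.expectation (trZ1 k0 \<mu> \<mu>'' (i, 0)) (\<lambda>s. real_of_int (snd s))\<bar>)
       \<and> (AE \<omega> in M. (\<lambda>n. real_of_int (snd (Z1 n \<omega>)) / real n) \<longlonglongrightarrow>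
             (\<Sum>i. pmf \<pi>1 i * measure_pmf.expectation (trZ1 k0 \<mu> \<mu>'' (i, 0)) (\<lambda>s. real_of_int (snd s))))"
proof -
  interpret rw1 k0 \<mu> \<mu>'' \<delta> \<gamma> C \<pi>1
  proof
    show "\<And>x. (\<integral>\<^sup>+ d. ennreal (exp (\<delta> * real_of_int (fst d) + \<gamma> * real_of_int (snd d)))
               \<partial>measure_pmf (if k0 \<le> x then \<mu> else \<mu>'' x)) \<le> ennreal C"
    proof -
      fix x
      show "(\<integral>\<^sup>+ d. ennreal (exp (\<delta> * real_of_int (fst d) + \<gamma> * real_of_int (snd d)))
               \<partial>measure_pmf (if k0 \<le> x then \<mu> else \<mu>'' x)) \<le> ennreal C"
        using A2(4)[of x k0] by (cases "k0 \<le> x") (simp_all add: incZ_def)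
    qed
  qed (use k0 A1_mu A1_mu'' A2 A3 m1_neg pi1 in auto)
  have E_eq: "measure_pmf.expectation (trZ1 k0 \<mu> \<mu>'' (i, 0)) (\<lambda>s. real_of_int (snd s)) = gY i" for i
    using P1_integral[where G="\<lambda>s. real_of_int (snd s)" and s="(i, 0)"] by (simp add: gY_def)
  have I: "integrable (measure_pmf (trZ1 k0 \<mu> \<mu>'' (i, 0))) (\<lambda>s. real_of_int (snd s))" for i
    using P1_integrable[where G="\<lambda>s. real_of_int (snd s)" and s="(i, 0)"] int_snd[of i] by simp
  have S: "summable (\<lambda>i. \<bar>pmf \<pi>1 i * gY i\<bar>)"
  proof (rule summable_comparison_test)
    show "\<exists>N. \<forall>n\<ge>N. norm \<bar>pmf \<pi>1 n * gY n\<bar> \<le> D0 * pmf \<pi>1 n"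
      using gY_bound by (auto simp: abs_mult mult.commute intro!: mult_left_mono)
    show "summable (\<lambda>n. D0 * pmf \<pi>1 n)"
      using summable_mult[OF sums_summable[OF pi_sums]] by simp
  qed
  have V: "(\<Sum>i. pmf \<pi>1 i * gY i) = Vlim" using V_sum by (rule sums_unique[symmetric])
  show ?thesis
    unfolding E_eq V using I S Y_AE[OF chain] by simp
qed

end
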